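(* Let $N,m\ge1$ and for $p=1,\dots,m$ let $d_1^p,d_2^p\ge1$. Let $\kappa_1,\kappa_2\ge0$, and for $1\le j\le N$, $1\le p\le m$ let $B_j^p\in\mathbb C^{d_1^p\times d_2^p\times d_1^p\times d_2^p}$ satisfy $[B_j^p]_{\alpha_1\beta_1\alpha_2\beta_2}=-\overline{[B_j^p]_{\alpha_2\beta_2\alpha_1\beta_1}}$. Define the rank-$4m$ tensor $A_j$ by $$[A_j]_{\alpha_1\cdots\alpha_{2m}\beta_1\cdots\beta_{2m}}=\sum_{k=1}^m[B_j^k]_{\alpha_{2k-1}\alpha_{2k}\beta_{2k-1}\beta_{2k}}\prod_{\ell\ne k}\delta_{\alpha_{2\ell-1}\beta_{2\ell-1}}\delta_{\alpha_{2\ell}\beta_{2\ell}},$$ and consider the Lohe tensor model for rank-$2m$ tensors in $\mathbb C^{d_1^1\times d_2^1\times\cdots\times d_1^m\times d_2^m}$ with couplings $\kappa_{i_*}=\kappa_1$ if $i_*\in\Lambda_1$, $\kappa_{i_*}=\kappa_2$ if $i_*\in\Lambda_2$, and $\kappa_{i_*}=0$ otherwise, where $\Lambda_1$ (resp. $\Lambda_2$) is the set of $i_*\in\{0,1\}^{2m}$ having exactly one zero coordinate, located at an odd position $2q-1$ (resp. an even position $2q$), $1\le q\le m$. Then: (1) If $\{U_i^p\}$ is a solution of the multiple matrix model, then $T_i:=U_i^1\otimes U_i^2\otimes\cdots\otimes U_i^m$ is a (quadratically separable) solution of this Lohe tensor model with free flow tensors $A_i$. (2) If $\{T_i\}$ solves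 this Lohe tensor model with free flow tensors $A_i$ and initial data $T_i(0)=U_i^{1,0}\otimes\cdots\otimes U_i^{m,0}$, where $U_i^{p,0}\in\mathbb C^{d_1^p\times d_2^p}$ have unit Frobenius norm, then there exist matrices $U_i^p(t)$ of unit Frobenius norm with $T_i(t)=U_i^1(t)\otimes\cdots\otimes U_i^m(t)$ for $t>0$, where $\{U_i^p\}$ is the solution of the multiple matrix model with $U_i^p(0)=U_i^{p,0}$.
   Context: $\langle A,B\rangle_F=\mathrm{tr}(A^\dagger B)$, $\|A\|_F=\sqrt{\langle A,A\rangle_F}$; $[U^1\otimes\cdots\otimes U^m]_{\alpha_1\beta_1\cdots\alpha_m\beta_m}=[U^1]_{\alpha_1\beta_1}\cdots[U^m]_{\alpha_m\beta_m}$; repeated indices are summed. Multiple matrix model, for $U_j^p\in\mathbb C^{d_1^p\times d_2^p}$: $\dot U_j^p=B_j^pU_j^p+\frac{\kappa_1}{N}\sum_{k=1}^N\Big(\prod_{\ell\ne p}\langle U_j^\ell,U_k^\ell\rangle_F\,U_k^p(U_j^p)^\dagger U_j^p-\prod_{\ell\ne p}\langle U_k^\ell,U_j^\ell\rangle_F\,U_j^p(U_k^p)^\dagger U_j^p\Big)+\frac{\kappa_2}{N}\sum_{k=1}^N\Big(\prod_{\ell\ne p}\langle U_j^\ell,U_k^\ell\rangle_F\,U_j^p(U_j^p)^\dagger U_k^p-\prod_{\ell\ne p}\langle U_k^\ell,U_j^\ell\rangle_F\,U_j^p(U_k^p)^\dagger U_j^p\Big)$, with $[B_j^pU_j^p]_{\alpha\beta}=[B_j^p]_{\alpha\beta\gamma\delta}[U_j^p]_{\gamma\delta}$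 and products over $\ell\in\{1,\dots,m\}\setminus\{p\}$. Lohe tensor model for rank-$r$ tensors $T_j$: for $i_*\in\{0,1\}^r$ write $\alpha_{*i_*}=(\alpha_{1i_1},\dots,\alpha_{ri_r})$, $\alpha_{*(1-i_* )}=(\alpha_{1(1-i_1)},\dots)$; with $T_c=\frac1N\sum_kT_k$ and rank-$2r$ tensors $A_j$ satisfying $\overline{[A_j]_{\alpha_{*0}\alpha_{*1}}}=-[A_j]_{\alpha_{*1}\alpha_{*0}}$, $\frac{d}{dt}[T_j]_{\alpha_{*0}}=[A_j]_{\alpha_{*0}\alpha_{*1}}[T_j]_{\alpha_{*1}}+\sum_{i_*}\kappa_{i_*}\big([T_c]_{\alpha_{*i_*}}\overline{[T_j]_{\alpha_{*1}}}[T_j]_{\alpha_{*(1-i_* )}}-[T_j]_{\alpha_{*i_*}}\overline{[T_c]_{\alpha_{*1}}}[T_j]_{\alpha_{*(1-i_* )}}\big)$, summed over $\alpha_{*1}$. *)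

theory Defs
  imports "HOL-Analysis.Analysis"
begin

text \<open>Conventions: agents j are 0-based (j < N), factors p are 0-based (p < m).
 A matrix in C^{d1 x d2} is a function nat => nat => complex, only entries with
 row < d1, column < d2 matter. A rank-r tensor is a function nat list => complex,
 only index lists in idxs dims matter.\<close>

type_synonym cmat = "nat \<Rightarrow> nat \<Rightarrow> complex"

definition frob_inner :: "nat \<Rightarrow> nat \<Rightarrow> cmat \<Rightarrow> cmat \<Rightarrow> complex" where
  "frob_inner d1 d2 X Y = (\<Sum>a<d1. \<Sum>b<d2. cnj (X a b) * Y a b)"

definition frob_norm :: "nat \<Rightarrow> nat \<Rightarrow> cmat \<Rightarrow> real" where
  "frob_norm d1 d2 X = sqrt (\<Sum>a<d1. \<Sum>b<d2. (cmod (X a b))^2)"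

definition mat_mult :: "nat \<Rightarrow> cmat \<Rightarrow> cmat \<Rightarrow> cmat" where
  "mat_mult n X Y = (\<lambda>a c. \<Sum>b<n. X a b * Y b c)"

definition adj :: "cmat \<Rightarrow> cmat" where
  "adj X = (\<lambda>a b. cnj (X b a))"

definition apply4 :: "nat \<Rightarrow> nat \<Rightarrow> (nat \<Rightarrow> nat \<Rightarrow> nat \<Rightarrow> nat \<Rightarrow> complex) \<Rightarrow> cmat \<Rightarrow> cmat" where
  "apply4 d1 d2 B X = (\<lambda>a b. \<Sum>c<d1. \<Sum>d<d2. B a b c d * X c d)"

definition mm_rhs ::
  "nat \<Rightarrow> nat \<Rightarrow> (nat \<Rightarrow> nat) \<Rightarrow> (nat \<Rightarrow> nat) \<Rightarrow> real \<Rightarrow> real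
   \<Rightarrow> (nat \<Rightarrow> nat \<Rightarrow> nat \<Rightarrow> nat \<Rightarrow> nat \<Rightarrow> nat \<Rightarrow> complex)
   \<Rightarrow> (nat \<Rightarrow> nat \<Rightarrow> cmat) \<Rightarrow> nat \<Rightarrow> nat \<Rightarrow> cmat" where
  "mm_rhs N m d1 d2 \<kappa>1 \<kappa>2 B U j p =
    (let P = (\<lambda>j k. \<Prod>l\<in>{..<m} - {p}. frob_inner (d1 l) (d2 l) (U j l) (U k l));
         mm = (\<lambda>X Y Z. mat_mult (d1 p) (mat_mult (d2 p) X (adj Y)) Z)
     in (\<lambda>a b. apply4 (d1 p) (d2 p) (B j p) (U j p) a b
        + complex_of_real (\<kappa>1 / real N) *
            (\<Sum>k<N. P j k * mm (U k p) (U j p) (U j p) a b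
                   - P k j * mm (U j p) (U k p) (U j p) a b)
        + complex_of_real (\<kappa>2 / real N) *
            (\<Sum>k<N. P j k * mm (U j p) (U j p) (U k p) a b
                   - P k j * mm (U j p) (U k p) (U j p) a b)))"

definition mm_solution ::
  "nat \<Rightarrow> nat \<Rightarrow> (nat \<Rightarrow> nat) \<Rightarrow> (nat \<Rightarrow> nat) \<Rightarrow> real \<Rightarrow> real
   \<Rightarrow> (nat \<Rightarrow> nat \<Rightarrow> nat \<Rightarrow> nat \<Rightarrow> nat \<Rightarrow> nat \<Rightarrow> complex)
   \<Rightarrow> (nat \<Rightarrow> nat \<Rightarrow> real \<Rightarrow> cmat) \<Rightarrow> bool" where
  "mm_solution N m d1 d2 \<kappa>1 \<kappa>2 B U \<longleftrightarrow>
    (\<forall>t\<ge>0. \<forall>j<N. \<forall>p<m. \<forall>a<d1 p. \<forall>b<d2 p.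
       ((\<lambda>s. U j p s a b) has_vector_derivative
          mm_rhs N m d1 d2 \<kappa>1 \<kappa>2 B (\<lambda>j' p'. U j' p' t) j p a b) (at t within {0..}))"

definition idxs :: "nat list \<Rightarrow> nat list set" where
  "idxs dims = {as. length as = length dims \<and> (\<forall>k<length dims. as ! k < dims ! k)}"

definition tdims :: "nat \<Rightarrow> (nat \<Rightarrow> nat) \<Rightarrow> (nat \<Rightarrow> nat) \<Rightarrow> nat list" where
  "tdims m d1 d2 = concat (map (\<lambda>p. [d1 p, d2 p]) [0..<m])"

text \<open>alpha_{*i*}: coordinate k taken from a1 if i!k (i.e. i_k = 1), else from a0.\<close>
definition sel :: "bool list \<Rightarrow> nat list \<Rightarrow> nat list \<Rightarrow> nat list" where
  "sel i a0 a1 = map (\<lambda>k. if i ! k then a1 ! k else a0 ! k) [0..<length i]"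

definition onezero :: "nat \<Rightarrow> nat \<Rightarrow> bool list" where
  "onezero n q = map (\<lambda>k. k \<noteq> q) [0..<n]"

text \<open>Lambda_1: single zero at odd 1-based position 2q-1 (0-based 2q);
      Lambda_2: single zero at even 1-based position 2q (0-based 2q+1).\<close>
definition Lambda1 :: "nat \<Rightarrow> bool list set" where
  "Lambda1 m = {onezero (2*m) (2*q) | q. q < m}"

definition Lambda2 :: "nat \<Rightarrow> bool list set" where
  "Lambda2 m = {onezero (2*m) (2*q+1) | q. q < m}"

definition kappa_coupling :: "nat \<Rightarrow> real \<Rightarrow> real \<Rightarrow> bool list \<Rightarrow> real" where
  "kappa_coupling m \<kappa>1 \<kappa>2 i =
     (if i \<in> Lambda1 m then \<kappa>1 else if i \<in> Lambda2 m then \<kappa>2 else 0)"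

definition free_flow ::
  "nat \<Rightarrow> (nat \<Rightarrow> nat \<Rightarrow> nat \<Rightarrow> nat \<Rightarrow> nat \<Rightarrow> nat \<Rightarrow> complex) \<Rightarrow> nat
   \<Rightarrow> nat list \<Rightarrow> nat list \<Rightarrow> complex" where
  "free_flow m B j as bs =
    (\<Sum>k<m. B j k (as!(2*k)) (as!(2*k+1)) (bs!(2*k)) (bs!(2*k+1)) *
       (\<Prod>l\<in>{..<m} - {k}.
          (if as!(2*l) = bs!(2*l) then 1 else 0) * (if as!(2*l+1) = bs!(2*l+1) then 1 else 0)))"

definition lohe_rhs ::
  "nat list \<Rightarrow> (bool list \<Rightarrow> real) \<Rightarrow> (nat list \<Rightarrow> nat list \<Rightarrow> complex)
   \<Rightarrow> (nat list \<Rightarrow> complex) \<Rightarrow> (nat list \<Rightarrow> complex) \<Rightarrow> nat list \<Rightarrow> complex" where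
  "lohe_rhs dims \<kappa> A Tj Tc a0 =
     (\<Sum>a1\<in>idxs dims. A a0 a1 * Tj a1)
     + (\<Sum>i\<in>{i. length i = length dims}. complex_of_real (\<kappa> i) *
          (\<Sum>a1\<in>idxs dims.
             Tc (sel i a0 a1) * cnj (Tj a1) * Tj (sel (map Not i) a0 a1)
             - Tj (sel i a0 a1) * cnj (Tc a1) * Tj (sel (map Not i) a0 a1)))"

definition lohe_solution ::
  "nat \<Rightarrow> nat list \<Rightarrow> (bool list \<Rightarrow> real) \<Rightarrow> (nat \<Rightarrow> nat list \<Rightarrow> nat list \<Rightarrow> complex)
   \<Rightarrow> (nat \<Rightarrow> real \<Rightarrow> nat list \<Rightarrow> complex) \<Rightarrow> bool" where
  "lohe_solution N dims \<kappa> A T \<longleftrightarrow>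
    (\<forall>t\<ge>0. \<forall>j<N. \<forall>a0\<in>idxs dims.
       ((\<lambda>s. T j s a0) has_vector_derivative
          lohe_rhs dims \<kappa> (A j) (T j t) (\<lambda>a. (\<Sum>k<N. T k t a) / of_nat N) a0)
        (at t within {0..}))"

definition mtensor :: "nat \<Rightarrow> (nat \<Rightarrow> cmat) \<Rightarrow> nat list \<Rightarrow> complex" where
  "mtensor m V as = (\<Prod>p<m. V p (as!(2*p)) (as!(2*p+1)))"

end

theory Submission
  imports Defs "HOL-Analysis.Analysis"
begin

primrec pic :: "'i set \<Rightarrow> (real \<Rightarrow> 'i \<Rightarrow> 'i \<Rightarrow> complex) \<Rightarrow> ('i \<Rightarrow> complex) \<Rightarrow> nat \<Rightarrow> real \<Rightarrow> 'i \<Rightarrow> complex" where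
  "pic I M x0 0 t i = x0 i"
| "pic I M x0 (Suc n) t i = x0 i + integral {0..t} (\<lambda>s. \<Sum>k\<in>I. M s i k * pic I M x0 n s k)"

lemma pic_cont:
  assumes "finite I" "\<And>i k. continuous_on {0..\<tau>} (\<lambda>t. M t i k)"
  shows "continuous_on {0..\<tau>} (\<lambda>t. pic I M x0 n t i)"
proof (induction n arbitrary: i)
  case 0 then show ?case by simp
next
  case (Suc n)
  have "continuous_on {0..\<tau>} (\<lambda>s. \<Sum>k\<in>I. M s i k * pic I M x0 n s k)"
    using Suc assms by (intro continuous_intros) auto
  then have "continuous_on {0..\<tau>} (\<lambda>t. integral {0..t} (\<lambda>s. \<Sum>k\<in>I. M s i k * pic I M x0 n s k))"
    by (intro indefinite_integral_continuous_1 integrable_continuous_real)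
  then show ?case by (simp add: continuous_intros)
qed

lemma uniform_limit_sum':
  fixes f :: "'k \<Rightarrow> nat \<Rightarrow> 'a::topological_space \<Rightarrow> 'b::real_normed_vector"
  assumes "finite I" "\<And>k. k \<in> I \<Longrightarrow> uniform_limit S (f k) (g k) F"
  shows "uniform_limit S (\<lambda>n s. \<Sum>k\<in>I. f k n s) (\<lambda>s. \<Sum>k\<in>I. g k s) F"
  using assms
proof (induction I rule: finite_induct)
  case empty then show ?case by (simp add: uniform_limit_const)
next
  case (insert x I)
  then show ?case by (simp add: uniform_limit_add)
qed

lemma power_integral:
  assumes "0 \<le> t"
  shows "((\<lambda>s::real. s^n) has_integral t^(Suc n) / Suc n) {0..t}"
proof -
  have d: "((\<lambda>s::real. s^Suc n / Suc n) has_real_derivative s^n) (at s within {0..t})" for s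
  proof -
    have "((\<lambda>s::real. s^Suc n) has_real_derivative real (Suc n) * s ^ n) (at s within {0..t})"
      using DERIV_pow[of "Suc n" s] by (auto intro: has_field_derivative_at_within)
    from DERIV_cdivide[OF this, of "real (Suc n)"] show ?thesis by simp
  qed
  have "((\<lambda>s::real. s^n) has_integral (t^(Suc n) / Suc n - 0^(Suc n) / Suc n)) {0..t}"
    by (rule fundamental_theorem_of_calculus) (use assms d in \<open>auto simp: has_real_derivative_iff_has_vector_derivative[symmetric]\<close>)
  then show ?thesis by simp
qed


lemma pic_bound:
  assumes I: "finite I" and Mc: "\<And>i k. continuous_on {0..\<tau>} (\<lambda>t. M t i k)"
    and K: "\<And>s i. s \<in> {0..\<tau>} \<Longrightarrow> i \<in> I \<Longrightarrow> (\<Sum>k\<in>I. cmod (M s i k)) \<le> K"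
    and C: "\<And>t i. t \<in> {0..\<tau>} \<Longrightarrow> i \<in> I \<Longrightarrow> cmod (pic I M x0 1 t i - pic I M x0 0 t i) \<le> C"
    and K0: "0 \<le> K" and C0: "0 \<le> C"
  shows "t \<in> {0..\<tau>} \<Longrightarrow> i \<in> I \<Longrightarrow>
     cmod (pic I M x0 (Suc n) t i - pic I M x0 n t i) \<le> C * (K * t)^n / fact n"
proof (induction n arbitrary: t i)
  case 0 then show ?case using C by simp
next
  case (Suc n)
  let ?d = "\<lambda>s k. pic I M x0 (Suc n) s k - pic I M x0 n s k"
  have sub: "{0..t} \<subseteq> {0..\<tau>}" using Suc.prems by auto
  have int: "(\<lambda>s. \<Sum>k\<in>I. M s i k * pic I M x0 m s k) integrable_on {0..t}" for m
    apply (rule integrable_continuous_real)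
    using continuous_on_subset[OF Mc sub] continuous_on_subset[OF pic_cont[OF I Mc] sub]
    by (intro continuous_intros) auto
  have eq: "pic I M x0 (Suc (Suc n)) t i - pic I M x0 (Suc n) t i
        = integral {0..t} (\<lambda>s. \<Sum>k\<in>I. M s i k * ?d s k)"
  proof -
    have "pic I M x0 (Suc (Suc n)) t i - pic I M x0 (Suc n) t i
        = integral {0..t} (\<lambda>s. \<Sum>k\<in>I. M s i k * pic I M x0 (Suc n) s k)
          - integral {0..t} (\<lambda>s. \<Sum>k\<in>I. M s i k * pic I M x0 n s k)"
      unfolding pic.simps(2)[of _ _ _ "Suc n"] pic.simps(2)[of _ _ _ n] by simp
    also have "\<dots> = integral {0..t} (\<lambda>s. \<Sum>k\<in>I. M s i k * ?d s k)"
      by (simp del: pic.simps add: integral_diff[OF int int, symmetric] sum_subtractf[symmetric] right_diff_distrib)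
    finally show ?thesis .
  qed
  have bnd: "cmod (\<Sum>k\<in>I. M s i k * ?d s k) \<le> K * (C * (K * s)^n / fact n)" if s: "s \<in> {0..t}" for s
  proof -
    have "cmod (\<Sum>k\<in>I. M s i k * ?d s k) \<le> (\<Sum>k\<in>I. cmod (M s i k) * cmod (?d s k))"
      by (rule order_trans[OF norm_sum]) (simp add: norm_mult)
    also have "\<dots> \<le> (\<Sum>k\<in>I. cmod (M s i k) * (C * (K * s)^n / fact n))"
      by (rule sum_mono, rule mult_left_mono) (use Suc.IH s sub in auto)
    also have "\<dots> = (\<Sum>k\<in>I. cmod (M s i k)) * (C * (K * s)^n / fact n)"
      by (rule sum_distrib_right[symmetric])
    also have "\<dots> \<le> K * (C * (K * s)^n / fact n)"
      by (rule mult_right_mono) (use K s sub Suc.prems C0 K0 in auto)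
    finally show ?thesis .
  qed
  have pint: "((\<lambda>s. (K * C * K^n / fact n) * s^n) has_integral (K * C * K^n / fact n) * (t^(Suc n) / Suc n)) {0..t}"
    by (rule has_integral_mult_right, rule power_integral) (use Suc.prems in auto)
  have fe: "(\<lambda>s. K * (C * (K * s)^n / fact n)) = (\<lambda>s. (K * C * K^n / fact n) * s^n)"
    by (auto simp: power_mult_distrib field_simps)
  have "cmod (pic I M x0 (Suc (Suc n)) t i - pic I M x0 (Suc n) t i)
      \<le> integral {0..t} (\<lambda>s. K * (C * (K * s)^n / fact n))"
    unfolding eq
  proof (rule integral_norm_bound_integral)
    show "(\<lambda>s. \<Sum>k\<in>I. M s i k * ?d s k) integrable_on {0..t}"
      using integrable_diff[OF int[of "Suc n"] int[of n]]
      by (simp del: pic.simps add: sum_subtractf[symmetric] right_diff_distrib)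
  qed (use bnd pint fe in auto)
  also have "\<dots> = (K * C * K^n / fact n) * (t^(Suc n) / Suc n)"
    unfolding fe by (rule integral_unique[OF pint])
  also have "\<dots> = C * (K * t)^(Suc n) / fact (Suc n)"
    by (simp add: power_mult_distrib divide_simps)
  finally show ?case .
qed


lemma at_within_Ici_local:
  fixes t \<tau> :: real
  assumes "0 \<le> t" "t < \<tau>"
  shows "at t within {0..\<tau>} = at t within {0..}"
  by (rule at_within_nhd[of t "{..<\<tau>}"]) (use assms in auto)

lemma linear_ode_exists:
  fixes M :: "real \<Rightarrow> 'i \<Rightarrow> 'i \<Rightarrow> complex"
  assumes I: "finite I" and Mc: "\<And>i k. continuous_on {0..} (\<lambda>t. M t i k)"
  shows "\<exists>x. (\<forall>i. x 0 i = x0 i) \<and>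
     (\<forall>t\<ge>0. \<forall>i\<in>I. ((\<lambda>s. x s i) has_vector_derivative (\<Sum>k\<in>I. M t i k * x t k)) (at t within {0..}))"
proof -
  define x where "x t i = x0 i + (\<Sum>n. pic I M x0 (Suc n) t i - pic I M x0 n t i)" for t i
  have Mc': "continuous_on {0..\<tau>} (\<lambda>t. M t i k)" for \<tau> i k
    by (rule continuous_on_subset[OF Mc]) auto
  have ul: "uniform_limit {0..\<tau>} (\<lambda>n t. pic I M x0 n t i) (\<lambda>t. x t i) sequentially"
    if i: "i \<in> I" for \<tau> i
  proof -
    obtain K where K0: "K \<ge> 0" and Kb: "\<And>s. s \<in> {0..\<tau>} \<Longrightarrow> norm (\<Sum>i\<in>I. \<Sum>k\<in>I. cmod (M s i k)) \<le> K"
      by (rule continuous_on_compact_bound[of "{0..\<tau>}" "\<lambda>s. \<Sum>i\<in>I. \<Sum>k\<in>I. cmod (M s i k)"])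
         (auto intro!: continuous_intros Mc')
    have K: "(\<Sum>k\<in>I. cmod (M s j k)) \<le> K" if "s \<in> {0..\<tau>}" "j \<in> I" for s j
    proof -
      have "(\<Sum>k\<in>I. cmod (M s j k)) \<le> (\<Sum>i\<in>I. \<Sum>k\<in>I. cmod (M s i k))"
        by (rule member_le_sum) (use that I in \<open>auto intro: sum_nonneg\<close>)
      also have "\<dots> \<le> K" using Kb[OF that(1)] by simp
      finally show ?thesis .
    qed
    obtain C where C0: "C \<ge> 0" and Cb: "\<And>s. s \<in> {0..\<tau>} \<Longrightarrow> norm (\<Sum>i\<in>I. cmod (pic I M x0 1 s i - pic I M x0 0 s i)) \<le> C"
      by (rule continuous_on_compact_bound[of "{0..\<tau>}" "\<lambda>s. \<Sum>i\<in>I. cmod (pic I M x0 1 s i - pic I M x0 0 s i)"])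
         (auto intro!: continuous_intros pic_cont[OF I Mc'] simp del: pic.simps)
    have C: "cmod (pic I M x0 1 s j - pic I M x0 0 s j) \<le> C" if "s \<in> {0..\<tau>}" "j \<in> I" for s j
    proof -
      have "cmod (pic I M x0 1 s j - pic I M x0 0 s j) \<le> (\<Sum>i\<in>I. cmod (pic I M x0 1 s i - pic I M x0 0 s i))"
        by (rule member_le_sum) (use that I in \<open>auto simp del: pic.simps\<close>)
      also have "\<dots> \<le> C" using Cb[OF that(1)] by simp
      finally show ?thesis .
    qed
    have bd: "norm (pic I M x0 (Suc n) t i - pic I M x0 n t i) \<le> C * (K * \<tau>)^n / fact n"
      if t: "t \<in> {0..\<tau>}" for n t
    proof -
      have "norm (pic I M x0 (Suc n) t i - pic I M x0 n t i) \<le> C * (K * t)^n / fact n"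
        using pic_bound[OF I Mc' K C K0 C0 t i] by simp
      also have "\<dots> \<le> C * (K * \<tau>)^n / fact n"
        using t K0 C0 by (auto intro!: divide_right_mono mult_left_mono power_mono mult_left_mono)
      finally show ?thesis .
    qed
    have sm: "summable (\<lambda>n. C * (K * \<tau>)^n / fact n)"
      using summable_mult[OF summable_exp[of "K * \<tau>"], of C] by (simp add: field_simps)
    have "uniform_limit {0..\<tau>} (\<lambda>n t. \<Sum>j<n. pic I M x0 (Suc j) t i - pic I M x0 j t i)
        (\<lambda>t. \<Sum>j. pic I M x0 (Suc j) t i - pic I M x0 j t i) sequentially"
      by (rule Weierstrass_m_test[OF bd sm])
    from uniform_limit_add[OF uniform_limit_const[where c="\<lambda>t. x0 i"] this]
    moreover have "(\<Sum>j<n. pic I M x0 (Suc j) t i - pic I M x0 j t i) = pic I M x0 n t i - x0 i" for n t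
      using sum_lessThan_telescope[of "\<lambda>j. pic I M x0 j t i" n] by (simp del: pic.simps add: pic.simps(1))
    ultimately show ?thesis
      unfolding x_def by (simp del: pic.simps)
  qed
  have x0: "x 0 i = x0 i" for i
  proof -
    have "pic I M x0 n 0 i = x0 i" for n by (cases n) auto
    then show ?thesis by (simp add: x_def)
  qed
  have xc: "continuous_on {0..\<tau>} (\<lambda>t. x t i)" if "i \<in> I" for \<tau> i
    by (rule uniform_limit_theorem[OF always_eventually[OF allI[OF pic_cont[OF I Mc']]] ul[OF that]]) auto
  have xint: "x t i = x0 i + integral {0..t} (\<lambda>s. \<Sum>k\<in>I. M s i k * x s k)"
    if t: "t \<ge> 0" and i: "i \<in> I" for t i
  proof -
    have bM: "bounded ((\<lambda>s. M s i k) ` {0..t})" for k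
      by (rule compact_imp_bounded, rule compact_continuous_image[OF Mc']) auto
    have bx: "bounded ((\<lambda>s. x s k) ` {0..t})" if "k \<in> I" for k
      by (rule compact_imp_bounded, rule compact_continuous_image[OF xc[OF that]]) auto
    have u: "uniform_limit {0..t} (\<lambda>n s. \<Sum>k\<in>I. M s i k * pic I M x0 n s k)
             (\<lambda>s. \<Sum>k\<in>I. M s i k * x s k) sequentially"
      by (rule uniform_limit_sum'[OF I], rule uniform_lim_mult[OF uniform_limit_const ul])
         (use bM bx in auto)
    have c: "continuous_on {0..t} (\<lambda>s. \<Sum>k\<in>I. M s i k * pic I M x0 n s k)" for n
      by (intro continuous_intros Mc' pic_cont[OF I Mc'])
    obtain In J where In: "\<And>n. ((\<lambda>s. \<Sum>k\<in>I. M s i k * pic I M x0 n s k) has_integral In n) {0..t}"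
      and J: "((\<lambda>s. \<Sum>k\<in>I. M s i k * x s k) has_integral J) {0..t}" and lim: "In \<longlonglongrightarrow> J"
      by (rule uniform_limit_integral[OF u c]) auto
    have "(\<lambda>n. pic I M x0 (Suc n) t i) = (\<lambda>n. x0 i + In n)"
      using In by (auto simp: integral_unique)
    moreover have "(\<lambda>n. pic I M x0 (Suc n) t i) \<longlonglongrightarrow> x t i"
    proof -
      have "(\<lambda>n. pic I M x0 n t i) \<longlonglongrightarrow> x t i"
        using tendsto_uniform_limitI[OF ul[OF i], of t t] t by simp
      from LIMSEQ_Suc[OF this] show ?thesis by (simp del: pic.simps)
    qed
    ultimately have "(\<lambda>n. x0 i + In n) \<longlonglongrightarrow> x t i" by simp
    moreover have "(\<lambda>n. x0 i + In n) \<longlonglongrightarrow> x0 i + J" by (intro tendsto_intros lim)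
    ultimately have "x t i = x0 i + J" by (rule LIMSEQ_unique)
    then show ?thesis using J by (simp add: integral_unique)
  qed
  have "((\<lambda>s. x s i) has_vector_derivative (\<Sum>k\<in>I. M t i k * x t k)) (at t within {0..})"
    if t: "t \<ge> 0" and i: "i \<in> I" for t i
  proof -
    have G: "continuous_on {0..t+1} (\<lambda>s. \<Sum>k\<in>I. M s i k * x s k)"
      by (intro continuous_intros Mc' xc)
    have "((\<lambda>u. x0 i + integral {0..u} (\<lambda>s. \<Sum>k\<in>I. M s i k * x s k)) has_vector_derivative
        (\<Sum>k\<in>I. M t i k * x t k)) (at t within {0..t+1})"
      using integral_has_vector_derivative[OF G, of t] t
      by (auto intro!: derivative_eq_intros)
    then have "((\<lambda>s. x s i) has_vector_derivative (\<Sum>k\<in>I. M t i k * x t k)) (at t within {0..t+1})"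
      by (rule has_vector_derivative_transform_within[of _ _ _ _ 1]) (use t xint i in auto)
    then show ?thesis using at_within_Ici_local[of t "t+1"] t by simp
  qed
  then show ?thesis using x0 by blast
qed


lemma cmod_sq_deriv:
  fixes z :: "real \<Rightarrow> complex"
  assumes "(z has_vector_derivative z') (at t within S)"
  shows "((\<lambda>s. (cmod (z s))^2) has_real_derivative 2 * (Re (z t) * Re z' + Im (z t) * Im z')) (at t within S)"
proof -
  have r: "((\<lambda>s. Re (z s)) has_real_derivative Re z') (at t within S)"
   and i: "((\<lambda>s. Im (z s)) has_real_derivative Im z') (at t within S)"
    using assms by (auto simp: has_vector_derivative_complex_iff)
  have "((\<lambda>s. (Re (z s))^2 + (Im (z s))^2) has_real_derivative 2 * (Re (z t) * Re z' + Im (z t) * Im z')) (at t within S)"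
    by (rule derivative_eq_intros r i refl)+ (simp add: algebra_simps)
  then show ?thesis by (simp add: cmod_power2)
qed

lemma re_im_le_cmod: "Re a * Re b + Im a * Im b \<le> cmod a * cmod b"
proof -
  have "Re a * Re b + Im a * Im b = Re (cnj a * b)" by simp
  also have "\<dots> \<le> cmod (cnj a * b)" by (rule complex_Re_le_cmod)
  finally show ?thesis by (simp add: norm_mult)
qed

lemma at_within_Ici_pos:
  fixes x :: real
  assumes "0 < x"
  shows "at x within {0..} = at x"
proof -
  have "{0..} \<inter> {0<..} - {x} = {0<..} - {x}" by auto
  then show ?thesis using at_within_nhd[of x "{0<..}" "{0..}" UNIV] assms by auto
qed

lemma linear_ode_unique:
  fixes D :: "real \<Rightarrow> 'i \<Rightarrow> complex" and L :: "real \<Rightarrow> 'i \<Rightarrow> complex"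
  assumes I: "finite I"
    and der: "\<And>t a. t \<ge> 0 \<Longrightarrow> a \<in> I \<Longrightarrow> ((\<lambda>s. D s a) has_vector_derivative L t a) (at t within {0..})"
    and bnd: "\<And>\<tau>. \<exists>K. \<forall>t\<in>{0..\<tau>}. \<forall>a\<in>I. cmod (L t a) \<le> K * (\<Sum>b\<in>I. cmod (D t b))"
    and D0: "\<And>a. a \<in> I \<Longrightarrow> D 0 a = 0"
    and t: "t \<ge> 0" and a: "a \<in> I"
  shows "D t a = 0"
proof -
  obtain K0 where K0: "\<forall>s\<in>{0..t}. \<forall>a\<in>I. cmod (L s a) \<le> K0 * (\<Sum>b\<in>I. cmod (D s b))"
    using bnd by blast
  define K where "K = \<bar>K0\<bar>"
  have K: "cmod (L s a) \<le> K * (\<Sum>b\<in>I. cmod (D s b))" if "s \<in> {0..t}" "a \<in> I" for s a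
  proof -
    have "K0 * (\<Sum>b\<in>I. cmod (D s b)) \<le> K * (\<Sum>b\<in>I. cmod (D s b))"
      unfolding K_def by (rule mult_right_mono) (auto intro: sum_nonneg)
    then show ?thesis using K0 that by force
  qed
  have Kp: "K \<ge> 0" by (simp add: K_def)
  define f where "f s = (\<Sum>a\<in>I. (cmod (D s a))^2)" for s
  define f' where "f' s = (\<Sum>a\<in>I. 2 * (Re (D s a) * Re (L s a) + Im (D s a) * Im (L s a)))" for s
  define c where "c = 2 * K * (real (card I))^2"
  have c0: "c \<ge> 0" using Kp by (simp add: c_def)
  have fd: "(f has_real_derivative f' s) (at s within {0..})" if "s \<ge> 0" for s
    unfolding f_def f'_def
    by (rule DERIV_sum, rule cmod_sq_deriv, rule der) (use that in auto)
  have f0: "f s \<ge> 0" for s unfolding f_def by (auto intro: sum_nonneg)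
  have fle: "f' s \<le> c * f s" if s: "s \<in> {0..t}" for s
  proof -
    define S where "S = (\<Sum>b\<in>I. cmod (D s b))"
    have Sb: "S \<le> real (card I) * sqrt (f s)"
    proof -
      have "cmod (D s b) \<le> sqrt (f s)" if "b \<in> I" for b
      proof -
        have "(cmod (D s b))^2 \<le> f s" unfolding f_def
          by (rule member_le_sum) (use that I in auto)
        then show ?thesis using real_le_rsqrt by blast
      qed
      then have "S \<le> (\<Sum>b\<in>I. sqrt (f s))" unfolding S_def by (rule sum_mono)
      then show ?thesis by simp
    qed
    have S0: "S \<ge> 0" unfolding S_def by (auto intro: sum_nonneg)
    have "f' s \<le> (\<Sum>a\<in>I. 2 * (cmod (D s a) * cmod (L s a)))"
      unfolding f'_def
    proof (rule sum_mono)
      fix a show "2 * (Re (D s a) * Re (L s a) + Im (D s a) * Im (L s a)) \<le> 2 * (cmod (D s a) * cmod (L s a))"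
        using mult_left_mono[OF re_im_le_cmod[of "D s a" "L s a"], of 2] by simp
    qed
    also have "\<dots> \<le> (\<Sum>a\<in>I. 2 * (cmod (D s a) * (K * S)))"
      by (rule sum_mono) (use K[OF s] in \<open>auto intro!: mult_left_mono simp: S_def\<close>)
    also have "\<dots> = 2 * K * S * S"
      by (simp add: S_def sum_distrib_left sum_distrib_right algebra_simps)
    also have "\<dots> \<le> 2 * K * (real (card I) * sqrt (f s)) * (real (card I) * sqrt (f s))"
      using Sb S0 Kp by (intro mult_mono) auto
    also have "\<dots> = c * f s"
      using f0[of s] by (simp add: c_def power2_eq_square algebra_simps)
    finally show ?thesis .
  qed
  define g where "g s = exp (- c * s) * f s" for s
  have gd: "(g has_real_derivative exp (- c * s) * (f' s - c * f s)) (at s within {0..})" if "s \<ge> 0" for s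
    unfolding g_def
    by (rule derivative_eq_intros fd[OF that] refl)+ (simp add: algebra_simps)
  have "g t \<le> g 0"
  proof (rule DERIV_nonpos_imp_decreasing_open[OF t])
    fix x assume x: "0 < x" "x < t"
    have "(g has_real_derivative exp (- c * x) * (f' x - c * f x)) (at x)"
      using gd[of x] x at_within_Ici_pos[of x] by simp
    moreover have "exp (- c * x) * (f' x - c * f x) \<le> 0"
      using fle[of x] x by (simp add: mult_nonneg_nonpos)
    ultimately show "\<exists>y. (g has_real_derivative y) (at x) \<and> y \<le> 0" by blast
  next
    show "continuous_on {0..t} g"
      unfolding continuous_on_eq_continuous_within
    proof
      fix x assume "x \<in> {0..t}"
      then have "continuous (at x within {0..}) g" using gd[of x] by (auto intro: DERIV_continuous)
      then show "continuous (at x within {0..t}) g" by (rule continuous_within_subset) auto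
    qed
  qed
  moreover have "g 0 = 0" using D0 by (simp add: g_def f_def)
  ultimately have "f t \<le> 0" by (simp add: g_def mult_le_0_iff)
  then have "f t = 0" using f0[of t] by simp
  then have "(cmod (D t a))^2 = 0" unfolding f_def using I a
    by (subst (asm) sum_nonneg_eq_0_iff) auto
  then show ?thesis by simp
qed


lemma tdims_Suc: "tdims (Suc m) d1 d2 = tdims m d1 d2 @ [d1 m, d2 m]"
  by (simp add: tdims_def)

lemma length_tdims[simp]: "length (tdims m d1 d2) = 2 * m"
  by (induction m) (auto simp: tdims_Suc tdims_def)

lemma tdims_nth_all: "\<forall>p<m. tdims m d1 d2 ! (2*p) = d1 p \<and> tdims m d1 d2 ! (2*p+1) = d2 p"
  by (induction m) (auto simp: tdims_Suc nth_append less_Suc_eq)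

lemma tdims_nth:
  assumes "p < m"
  shows "tdims m d1 d2 ! (2*p) = d1 p" "tdims m d1 d2 ! (2*p+1) = d2 p"
  using tdims_nth_all assms by auto

lemma tdims_nth_Suc[simp]: "p < m \<Longrightarrow> tdims m d1 d2 ! Suc (2*p) = d2 p"
  using tdims_nth(2) by simp

lemma tdims_nth_even[simp]: "p < m \<Longrightarrow> tdims m d1 d2 ! (2*p) = d1 p"
  using tdims_nth(1) by simp

lemma idxs_Nil: "idxs [] = {[]}"
  by (auto simp: idxs_def)

lemma idxs_snoc: "idxs (xs @ [u]) = (\<lambda>(a, x). a @ [x]) ` (idxs xs \<times> {..<u})"
proof (intro set_eqI iffI)
  fix as assume as: "as \<in> idxs (xs @ [u])"
  then have len: "length as = Suc (length xs)" by (simp add: idxs_def)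
  then obtain a x where ax: "as = a @ [x]"
    by (metis length_Suc_conv_rev)
  have la: "length a = length xs" using len ax by simp
  have b: "\<forall>k<Suc (length xs). (a @ [x]) ! k < (xs @ [u]) ! k" using as ax by (simp add: idxs_def)
  have "a \<in> idxs xs" unfolding idxs_def
  proof (intro CollectI conjI allI impI)
    fix k assume "k < length xs"
    then show "a ! k < xs ! k" using b[rule_format, of k] la by (simp add: nth_append)
  qed (use la in simp)
  moreover have "x < u" using b[rule_format, of "length xs"] la by (simp add: nth_append)
  ultimately show "as \<in> (\<lambda>(a, x). a @ [x]) ` (idxs xs \<times> {..<u})" using ax by auto
next
  fix as assume "as \<in> (\<lambda>(a, x). a @ [x]) ` (idxs xs \<times> {..<u})"
  then obtain a x where "as = a @ [x]" "a \<in> idxs xs" "x < u" by auto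
  then show "as \<in> idxs (xs @ [u])"
    by (auto simp: idxs_def nth_append less_Suc_eq)
qed

lemma finite_idxs[simp]: "finite (idxs xs)"
  by (induction xs rule: rev_induct) (auto simp: idxs_Nil idxs_snoc)

lemma idxs_length: "a \<in> idxs dims \<Longrightarrow> length a = length dims"
  by (simp add: idxs_def)

lemma idxs_upd:
  assumes "a \<in> idxs dims" "c < dims ! r"
  shows "a[r := c] \<in> idxs dims"
proof -
  have "a[r := c] ! k < dims ! k" if "k < length dims" for k
    using assms that by (cases "k = r") (auto simp: idxs_def)
  then show ?thesis using assms by (simp add: idxs_def)
qed

lemma idxs_nth: "a \<in> idxs dims \<Longrightarrow> r < length dims \<Longrightarrow> a ! r < dims ! r"
  by (simp add: idxs_def)

lemma idxs_tdims_Suc: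
  "idxs (tdims (Suc m) d1 d2) = (\<lambda>(a, x, y). a @ [x, y]) ` (idxs (tdims m d1 d2) \<times> {..<d1 m} \<times> {..<d2 m})"
proof -
  have "idxs (tdims (Suc m) d1 d2) = idxs ((tdims m d1 d2 @ [d1 m]) @ [d2 m])"
    by (simp add: tdims_Suc)
  also have "\<dots> = (\<lambda>(a, y). a @ [y]) ` ((\<lambda>(a, x). a @ [x]) ` (idxs (tdims m d1 d2) \<times> {..<d1 m}) \<times> {..<d2 m})"
    by (simp only: idxs_snoc)
  also have "\<dots> = (\<lambda>(a, x, y). a @ [x, y]) ` (idxs (tdims m d1 d2) \<times> {..<d1 m} \<times> {..<d2 m})"
    by (force simp: image_iff)
  finally show ?thesis .
qed

lemma sum3: "(\<Sum>(a,x,y)\<in>A\<times>B\<times>C. f a x y) = (\<Sum>a\<in>A. \<Sum>x\<in>B. \<Sum>y\<in>C. f a x y)"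
  by (simp add: sum.cartesian_product)

lemma nth_app2:
  assumes "length a = 2 * m"
  shows "(a @ [x, y]) ! (2*m) = x" "(a @ [x, y]) ! Suc (2*m) = y"
    "p < m \<Longrightarrow> (a @ [x, y]) ! (2*p) = a ! (2*p)"
    "p < m \<Longrightarrow> (a @ [x, y]) ! Suc (2*p) = a ! Suc (2*p)"
  using assms by (auto simp: nth_append)

lemma sum_idxs_prod:
  fixes g :: "nat \<Rightarrow> nat \<Rightarrow> nat \<Rightarrow> 'a::comm_semiring_1"
  shows "(\<Sum>a\<in>idxs (tdims m d1 d2). \<Prod>p<m. g p (a!(2*p)) (a!(2*p+1)))
       = (\<Prod>p<m. \<Sum>x<d1 p. \<Sum>y<d2 p. g p x y)"
proof (induction m)
  case 0 then show ?case by (simp add: tdims_def idxs_Nil)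
next
  case (Suc m)
  let ?f = "\<lambda>(a, x, y). (a::nat list) @ [x::nat, y::nat]"
  have inj: "inj_on ?f (idxs (tdims m d1 d2) \<times> {..<d1 m} \<times> {..<d2 m})"
    by (auto simp: inj_on_def dest: idxs_length)
  have pr: "(\<Prod>p<Suc m. g p ((a @ [x, y])!(2*p)) ((a @ [x, y])!(2*p+1)))
      = (\<Prod>p<m. g p (a!(2*p)) (a!(2*p+1))) * g m x y" if "a \<in> idxs (tdims m d1 d2)" for a x y
  proof -
    have l: "length a = 2 * m" using idxs_length[OF that] by simp
    have "(\<Prod>p<m. g p ((a @ [x, y])!(2*p)) ((a @ [x, y])!(2*p+1))) = (\<Prod>p<m. g p (a!(2*p)) (a!(2*p+1)))"
      by (rule prod.cong) (auto simp: nth_append l)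
    then show ?thesis by (simp add: l nth_append)
  qed
  have "(\<Sum>a\<in>idxs (tdims (Suc m) d1 d2). \<Prod>p<Suc m. g p (a!(2*p)) (a!(2*p+1)))
      = (\<Sum>(a, x, y)\<in>idxs (tdims m d1 d2) \<times> {..<d1 m} \<times> {..<d2 m}.
           (\<Prod>p<m. g p (a!(2*p)) (a!(2*p+1))) * g m x y)"
    unfolding idxs_tdims_Suc sum.reindex[OF inj]
    by (rule sum.cong) (auto simp: nth_app2 dest!: idxs_length intro!: prod.cong)
  also have "\<dots> = (\<Sum>a\<in>idxs (tdims m d1 d2). \<Sum>x<d1 m. \<Sum>y<d2 m. (\<Prod>p<m. g p (a!(2*p)) (a!(2*p+1))) * g m x y)"
    by (rule sum3)
  also have "\<dots> = (\<Sum>a\<in>idxs (tdims m d1 d2). \<Prod>p<m. g p (a!(2*p)) (a!(2*p+1))) * (\<Sum>x<d1 m. \<Sum>y<d2 m. g m x y)"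
    by (subst sum_distrib_right) (simp only: sum_distrib_left)
  also have "\<dots> = (\<Prod>p<Suc m. \<Sum>x<d1 p. \<Sum>y<d2 p. g p x y)"
    using Suc by simp
  finally show ?case .
qed


definition Hg :: "nat list \<Rightarrow> (nat list \<Rightarrow> complex) \<Rightarrow> (nat list \<Rightarrow> complex) \<Rightarrow> nat \<Rightarrow> nat \<Rightarrow> nat \<Rightarrow> complex" where
  "Hg dims Tj Tc r a c = (\<Sum>a1\<in>{a1\<in>idxs dims. a1!r = c}. Tc (a1[r:=a]) * cnj (Tj a1) - Tj (a1[r:=a]) * cnj (Tc a1))"

definition kap :: "real \<Rightarrow> real \<Rightarrow> nat \<Rightarrow> real" where
  "kap \<kappa>1 \<kappa>2 r = (if even r then \<kappa>1 else \<kappa>2)"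

definition Lin :: "nat list \<Rightarrow> real \<Rightarrow> real \<Rightarrow> (nat list \<Rightarrow> nat list \<Rightarrow> complex)
    \<Rightarrow> (nat \<Rightarrow> nat \<Rightarrow> nat \<Rightarrow> complex) \<Rightarrow> (nat list \<Rightarrow> complex) \<Rightarrow> nat list \<Rightarrow> complex" where
  "Lin dims \<kappa>1 \<kappa>2 A H X a0 = (\<Sum>a1\<in>idxs dims. A a0 a1 * X a1)
     + (\<Sum>r<length dims. of_real (kap \<kappa>1 \<kappa>2 r) * (\<Sum>c<dims!r. H r (a0!r) c * X (a0[r:=c])))"

lemma length_onezero[simp]: "length (onezero n r) = n"
  by (simp add: onezero_def)

lemma sel_onezero:
  assumes "length a0 = n" "length a1 = n" "r < n"
  shows "sel (onezero n r) a0 a1 = a1[r := a0!r]"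
  by (rule nth_equalityI) (use assms in \<open>auto simp: sel_def onezero_def nth_list_update\<close>)

lemma sel_onezero_not:
  assumes "length a0 = n" "length a1 = n" "r < n"
  shows "sel (map Not (onezero n r)) a0 a1 = a0[r := a1!r]"
  by (rule nth_equalityI) (use assms in \<open>auto simp: sel_def onezero_def nth_list_update\<close>)

lemma onezero_eq: "r < n \<Longrightarrow> r' < n \<Longrightarrow> onezero n r = onezero n r' \<Longrightarrow> r = r'"
proof -
  assume r: "r < n" "r' < n" "onezero n r = onezero n r'"
  then have "onezero n r ! r = onezero n r' ! r" by simp
  then show "r = r'" using r by (auto simp: onezero_def)
qed

lemma onezero_inj: "inj_on (onezero n) {..<n}"
  by (auto simp: inj_on_def intro: onezero_eq)

lemma kappa_onezero:
  assumes "r < 2*m"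
  shows "kappa_coupling m \<kappa>1 \<kappa>2 (onezero (2*m) r) = kap \<kappa>1 \<kappa>2 r"
proof (cases "even r")
  case True
  then obtain q where q: "r = 2*q" by blast
  with assms have "q < m" by simp
  then have "onezero (2*m) r \<in> Lambda1 m" using q by (auto simp: Lambda1_def)
  then show ?thesis using True by (simp add: kappa_coupling_def kap_def)
next
  case False
  then obtain q where q: "r = 2*q+1" by (metis oddE)
  with assms have "q < m" by simp
  then have "onezero (2*m) r \<in> Lambda2 m" using q by (auto simp: Lambda2_def)
  moreover have "onezero (2*m) r \<notin> Lambda1 m"
  proof
    assume "onezero (2*m) r \<in> Lambda1 m"
    then obtain q' where "q' < m" "onezero (2*m) r = onezero (2*m) (2*q')" by (auto simp: Lambda1_def)
    then have "r = 2*q'" using assms by (intro onezero_eq[of _ "2*m"]) auto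
    then show False using False by simp
  qed
  ultimately show ?thesis using False by (simp add: kappa_coupling_def kap_def)
qed

lemma kappa_sum:
  fixes F :: "bool list \<Rightarrow> complex"
  shows "(\<Sum>i\<in>{i. length i = 2*m}. complex_of_real (kappa_coupling m \<kappa>1 \<kappa>2 i) * F i)
       = (\<Sum>r<2*m. complex_of_real (kap \<kappa>1 \<kappa>2 r) * F (onezero (2*m) r))"
proof -
  have fin: "finite {i::bool list. length i = 2*m}"
    using finite_lists_length_eq[of "UNIV::bool set" "2*m"] by simp
  have sub: "onezero (2*m) ` {..<2*m} \<subseteq> {i. length i = 2*m}" by auto
  have z: "kappa_coupling m \<kappa>1 \<kappa>2 i = 0" if "i \<in> {i. length i = 2*m} - onezero (2*m) ` {..<2*m}" for i
  proof -
    have "i \<notin> Lambda1 m" "i \<notin> Lambda2 m" using that by (auto simp: Lambda1_def Lambda2_def)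
    then show ?thesis by (simp add: kappa_coupling_def)
  qed
  have "(\<Sum>i\<in>{i. length i = 2*m}. complex_of_real (kappa_coupling m \<kappa>1 \<kappa>2 i) * F i)
      = (\<Sum>i\<in>onezero (2*m) ` {..<2*m}. complex_of_real (kappa_coupling m \<kappa>1 \<kappa>2 i) * F i)"
    by (rule sum.mono_neutral_right[OF fin sub]) (use z in auto)
  also have "\<dots> = (\<Sum>r<2*m. complex_of_real (kap \<kappa>1 \<kappa>2 r) * F (onezero (2*m) r))"
    by (simp add: sum.reindex[OF onezero_inj] kappa_onezero)
  finally show ?thesis .
qed

lemma sum_group_nth:
  fixes F :: "nat list \<Rightarrow> 'a::comm_semiring_1"
  assumes "finite S" "\<And>a1. a1 \<in> S \<Longrightarrow> a1!r < n"
  shows "(\<Sum>a1\<in>S. F a1 * X (a1!r)) = (\<Sum>c<n. (\<Sum>a1\<in>{a1\<in>S. a1!r = c}. F a1) * X c)"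
proof -
  have "(\<Sum>a1\<in>S. F a1 * X (a1!r)) = (\<Sum>c<n. \<Sum>a1\<in>{a1\<in>S. a1!r = c}. F a1 * X (a1!r))"
    by (rule sum.group[symmetric]) (use assms in auto)
  also have "\<dots> = (\<Sum>c<n. (\<Sum>a1\<in>{a1\<in>S. a1!r = c}. F a1) * X c)"
    by (rule sum.cong[OF refl]) (simp add: sum_distrib_right)
  finally show ?thesis .
qed

lemma lohe_rhs_Lin:
  assumes a0: "a0 \<in> idxs (tdims m d1 d2)"
  shows "lohe_rhs (tdims m d1 d2) (kappa_coupling m \<kappa>1 \<kappa>2) A Tj Tc a0
       = Lin (tdims m d1 d2) \<kappa>1 \<kappa>2 A (\<lambda>r. Hg (tdims m d1 d2) Tj Tc r) Tj a0"
proof -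
  let ?D = "tdims m d1 d2"
  have la0: "length a0 = 2*m" using idxs_length[OF a0] by simp
  have inner: "(\<Sum>a1\<in>idxs ?D.
             Tc (sel (onezero (2*m) r) a0 a1) * cnj (Tj a1) * Tj (sel (map Not (onezero (2*m) r)) a0 a1)
             - Tj (sel (onezero (2*m) r) a0 a1) * cnj (Tc a1) * Tj (sel (map Not (onezero (2*m) r)) a0 a1))
       = (\<Sum>c<?D!r. Hg ?D Tj Tc r (a0!r) c * Tj (a0[r:=c]))" if r: "r < 2*m" for r
  proof -
    have "(\<Sum>a1\<in>idxs ?D.
             Tc (sel (onezero (2*m) r) a0 a1) * cnj (Tj a1) * Tj (sel (map Not (onezero (2*m) r)) a0 a1)
             - Tj (sel (onezero (2*m) r) a0 a1) * cnj (Tc a1) * Tj (sel (map Not (onezero (2*m) r)) a0 a1))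
        = (\<Sum>a1\<in>idxs ?D. (Tc (a1[r := a0!r]) * cnj (Tj a1) - Tj (a1[r := a0!r]) * cnj (Tc a1))
              * (\<lambda>c. Tj (a0[r := c])) (a1!r))"
      by (rule sum.cong[OF refl])
         (use la0 r in \<open>auto simp: sel_onezero sel_onezero_not algebra_simps dest: idxs_length\<close>)
    also have "\<dots> = (\<Sum>c<?D!r. Hg ?D Tj Tc r (a0!r) c * Tj (a0[r:=c]))"
      by (subst sum_group_nth[where n="?D!r"]) (use r in \<open>auto simp: Hg_def intro: idxs_nth\<close>)
    finally show ?thesis .
  qed
  have "(\<Sum>r<2*m. complex_of_real (kap \<kappa>1 \<kappa>2 r) * (\<Sum>a1\<in>idxs ?D.
             Tc (sel (onezero (2*m) r) a0 a1) * cnj (Tj a1) * Tj (sel (map Not (onezero (2*m) r)) a0 a1)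
             - Tj (sel (onezero (2*m) r) a0 a1) * cnj (Tc a1) * Tj (sel (map Not (onezero (2*m) r)) a0 a1)))
      = (\<Sum>r<2*m. complex_of_real (kap \<kappa>1 \<kappa>2 r) * (\<Sum>c<?D!r. Hg ?D Tj Tc r (a0!r) c * Tj (a0[r:=c])))"
    by (rule sum.cong[OF refl]) (simp add: inner)
  then show ?thesis
    unfolding lohe_rhs_def Lin_def length_tdims kappa_sum by simp
qed


lemma prod_delta2:
  fixes P Q :: "nat \<Rightarrow> bool"
  assumes "finite S"
  shows "(\<Prod>l\<in>S. (if P l then 1 else 0) * (if Q l then 1 else 0) :: complex)
       = (if \<forall>l\<in>S. P l \<and> Q l then 1 else 0)"
  using assms by (induction S rule: finite_induct) auto

lemma nth_upd2:
  assumes "2*k+1 < length a"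
  shows "a[2*k := c, 2*k+1 := d] ! (2*k) = c" "a[2*k := c, 2*k+1 := d] ! (2*k+1) = d"
    "l \<noteq> k \<Longrightarrow> a[2*k := c, 2*k+1 := d] ! (2*l) = a ! (2*l)"
    "l \<noteq> k \<Longrightarrow> a[2*k := c, 2*k+1 := d] ! (2*l+1) = a ! (2*l+1)"
  using assms by (auto simp: nth_list_update)

lemma agree_set:
  assumes a0: "a0 \<in> idxs (tdims m d1 d2)" and k: "k < m"
  shows "{a1 \<in> idxs (tdims m d1 d2). \<forall>l\<in>{..<m} - {k}. a0!(2*l) = a1!(2*l) \<and> a0!(2*l+1) = a1!(2*l+1)}
       = (\<lambda>(c, d). a0[2*k := c, 2*k+1 := d]) ` ({..<d1 k} \<times> {..<d2 k})"
proof (intro set_eqI iffI)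
  have la0: "length a0 = 2*m" using idxs_length[OF a0] by simp
  fix a1 assume "a1 \<in> {a1 \<in> idxs (tdims m d1 d2). \<forall>l\<in>{..<m} - {k}. a0!(2*l) = a1!(2*l) \<and> a0!(2*l+1) = a1!(2*l+1)}"
  then have a1: "a1 \<in> idxs (tdims m d1 d2)" and ag: "\<And>l. l < m \<Longrightarrow> l \<noteq> k \<Longrightarrow> a0!(2*l) = a1!(2*l) \<and> a0!(2*l+1) = a1!(2*l+1)"
    by auto
  have la1: "length a1 = 2*m" using idxs_length[OF a1] by simp
  have eq: "a1 = a0[2*k := a1!(2*k), 2*k+1 := a1!(2*k+1)]"
  proof (rule nth_equalityI)
    show "length a1 = length (a0[2*k := a1!(2*k), 2*k+1 := a1!(2*k+1)])" using la0 la1 by simp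
  next
    fix i assume i: "i < length a1"
    define l where "l = i div 2"
    have il: "i = 2*l \<or> i = 2*l+1" unfolding l_def by presburger
    have lm: "l < m" using i la1 unfolding l_def by simp
    show "a1 ! i = a0[2*k := a1!(2*k), 2*k+1 := a1!(2*k+1)] ! i"
    proof (cases "l = k")
      case True then show ?thesis using il la0 lm by (auto simp: nth_list_update)
    next
      case False then show ?thesis using il la0 lm ag[OF lm False] by (auto simp: nth_list_update)
    qed
  qed
  have "a1!(2*k) < d1 k" "a1!(2*k+1) < d2 k"
    using idxs_nth[OF a1, of "2*k"] idxs_nth[OF a1, of "2*k+1"] k by (auto simp: tdims_nth)
  then show "a1 \<in> (\<lambda>(c, d). a0[2*k := c, 2*k+1 := d]) ` ({..<d1 k} \<times> {..<d2 k})"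
    using eq by force
next
  have la0: "length a0 = 2*m" using idxs_length[OF a0] by simp
  fix a1 assume "a1 \<in> (\<lambda>(c, d). a0[2*k := c, 2*k+1 := d]) ` ({..<d1 k} \<times> {..<d2 k})"
  then obtain c d where a1: "a1 = a0[2*k := c, 2*k+1 := d]" and cd: "c < d1 k" "d < d2 k" by auto
  have "a1 \<in> idxs (tdims m d1 d2)" unfolding a1
    by (intro idxs_upd a0) (use cd k in \<open>auto simp: tdims_nth\<close>)
  moreover have "\<forall>l\<in>{..<m} - {k}. a0!(2*l) = a1!(2*l) \<and> a0!(2*l+1) = a1!(2*l+1)"
    unfolding a1 using k la0 by (auto simp: nth_list_update)
  ultimately show "a1 \<in> {a1 \<in> idxs (tdims m d1 d2). \<forall>l\<in>{..<m} - {k}. a0!(2*l) = a1!(2*l) \<and> a0!(2*l+1) = a1!(2*l+1)}"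
    by simp
qed

lemma free_flow_sum:
  assumes a0: "a0 \<in> idxs (tdims m d1 d2)"
  shows "(\<Sum>a1\<in>idxs (tdims m d1 d2). free_flow m B j a0 a1 * X a1)
       = (\<Sum>k<m. \<Sum>c<d1 k. \<Sum>d<d2 k. B j k (a0!(2*k)) (a0!(2*k+1)) c d * X (a0[2*k := c, 2*k+1 := d]))"
proof -
  let ?D = "tdims m d1 d2"
  have la0: "length a0 = 2*m" using idxs_length[OF a0] by simp
  have "(\<Sum>a1\<in>idxs ?D. free_flow m B j a0 a1 * X a1)
     = (\<Sum>k<m. \<Sum>a1\<in>idxs ?D. B j k (a0!(2*k)) (a0!(2*k+1)) (a1!(2*k)) (a1!(2*k+1)) *
          (\<Prod>l\<in>{..<m} - {k}. (if a0!(2*l) = a1!(2*l) then 1 else 0) * (if a0!(2*l+1) = a1!(2*l+1) then 1 else 0)) * X a1)"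
    unfolding free_flow_def by (subst sum.swap) (simp add: sum_distrib_right)
  also have "\<dots> = (\<Sum>k<m. \<Sum>c<d1 k. \<Sum>d<d2 k. B j k (a0!(2*k)) (a0!(2*k+1)) c d * X (a0[2*k := c, 2*k+1 := d]))"
  proof (rule sum.cong[OF refl])
    fix k assume "k \<in> {..<m}"
    then have k: "k < m" by simp
    let ?P = "\<lambda>a1. \<forall>l\<in>{..<m} - {k}. a0!(2*l) = a1!(2*l) \<and> a0!(2*l+1) = a1!(2*l+1)"
    let ?g = "\<lambda>a1. B j k (a0!(2*k)) (a0!(2*k+1)) (a1!(2*k)) (a1!(2*k+1)) * X a1"
    have inj: "inj_on (\<lambda>(c, d). a0[2*k := c, 2*k+1 := d]) ({..<d1 k} \<times> {..<d2 k})"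
    proof -
      have "c = c' \<and> d = d'" if h: "a0[2*k := c, 2*k+1 := d] = a0[2*k := c', 2*k+1 := d']" for c d c' d'
      proof -
        have "a0[2*k := c, 2*k+1 := d] ! (2*k) = a0[2*k := c', 2*k+1 := d'] ! (2*k)"
          "a0[2*k := c, 2*k+1 := d] ! (2*k+1) = a0[2*k := c', 2*k+1 := d'] ! (2*k+1)" using h by auto
        then show ?thesis using nth_upd2 k la0 by simp
      qed
      then show ?thesis by (auto simp: inj_on_def)
    qed
    have "(\<Sum>a1\<in>idxs ?D. B j k (a0!(2*k)) (a0!(2*k+1)) (a1!(2*k)) (a1!(2*k+1)) *
          (\<Prod>l\<in>{..<m} - {k}. (if a0!(2*l) = a1!(2*l) then 1 else 0) * (if a0!(2*l+1) = a1!(2*l+1) then 1 else 0)) * X a1)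
        = (\<Sum>a1\<in>idxs ?D. if ?P a1 then ?g a1 else 0)"
      by (rule sum.cong[OF refl]) (simp add: prod_delta2)
    also have "\<dots> = (\<Sum>a1\<in>{a1\<in>idxs ?D. ?P a1}. ?g a1)"
      by (rule sum.inter_filter[symmetric]) simp
    also have "\<dots> = (\<Sum>(c,d)\<in>{..<d1 k} \<times> {..<d2 k}. ?g (a0[2*k := c, 2*k+1 := d]))"
      unfolding agree_set[OF a0 k] sum.reindex[OF inj] by (simp add: case_prod_beta)
    also have "\<dots> = (\<Sum>c<d1 k. \<Sum>d<d2 k. B j k (a0!(2*k)) (a0!(2*k+1)) c d * X (a0[2*k := c, 2*k+1 := d]))"
      unfolding sum.cartesian_product[symmetric] using nth_upd2 k la0 by simp
    finally show "(\<Sum>a1\<in>idxs ?D. B j k (a0!(2*k)) (a0!(2*k+1)) (a1!(2*k)) (a1!(2*k+1)) *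
          (\<Prod>l\<in>{..<m} - {k}. (if a0!(2*l) = a1!(2*l) then 1 else 0) * (if a0!(2*l+1) = a1!(2*l+1) then 1 else 0)) * X a1)
        = (\<Sum>c<d1 k. \<Sum>d<d2 k. B j k (a0!(2*k)) (a0!(2*k+1)) c d * X (a0[2*k := c, 2*k+1 := d]))" .
  qed
  finally show ?thesis .
qed

lemma mtensor_agree:
  assumes q: "q < m" and ag: "\<And>l. l < m \<Longrightarrow> l \<noteq> q \<Longrightarrow> a'!(2*l) = a!(2*l) \<and> a'!(2*l+1) = a!(2*l+1)"
  shows "mtensor m V a' = V q (a'!(2*q)) (a'!(2*q+1)) * (\<Prod>l\<in>{..<m} - {q}. V l (a!(2*l)) (a!(2*l+1)))"
proof -
  have "mtensor m V a' = V q (a'!(2*q)) (a'!(2*q+1)) * (\<Prod>l\<in>{..<m} - {q}. V l (a'!(2*l)) (a'!(2*l+1)))"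
    unfolding mtensor_def by (rule prod.remove) (use q in auto)
  also have "(\<Prod>l\<in>{..<m} - {q}. V l (a'!(2*l)) (a'!(2*l+1))) = (\<Prod>l\<in>{..<m} - {q}. V l (a!(2*l)) (a!(2*l+1)))"
    by (rule prod.cong[OF refl]) (use ag in auto)
  finally show ?thesis .
qed

lemma sum_even_odd:
  fixes f :: "nat \<Rightarrow> 'a::comm_monoid_add"
  shows "(\<Sum>r<2*m. f r) = (\<Sum>q<m. f (2*q) + f (2*q+1))"
  by (induction m) (auto simp: algebra_simps)


lemma mtensor_deriv:
  fixes V :: "real \<Rightarrow> nat \<Rightarrow> cmat"
  assumes "\<And>p. p < m \<Longrightarrow> ((\<lambda>s. V s p (a!(2*p)) (a!(2*p+1))) has_vector_derivative V' p) (at t within S)"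
  shows "((\<lambda>s. mtensor m (V s) a) has_vector_derivative
           (\<Sum>q<m. V' q * (\<Prod>l\<in>{..<m}-{q}. V t l (a!(2*l)) (a!(2*l+1))))) (at t within S)"
proof -
  have "((\<lambda>s. \<Prod>p<m. V s p (a!(2*p)) (a!(2*p+1))) has_derivative
         (\<lambda>y. \<Sum>q<m. (y *\<^sub>R V' q) * (\<Prod>l\<in>{..<m}-{q}. V t l (a!(2*l)) (a!(2*l+1))))) (at t within S)"
    by (rule has_derivative_prod) (use assms in \<open>auto simp: has_vector_derivative_def\<close>)
  moreover have "(\<lambda>y. \<Sum>q<m. (y *\<^sub>R V' q) * (\<Prod>l\<in>{..<m}-{q}. V t l (a!(2*l)) (a!(2*l+1))))
      = (\<lambda>y. y *\<^sub>R (\<Sum>q<m. V' q * (\<Prod>l\<in>{..<m}-{q}. V t l (a!(2*l)) (a!(2*l+1)))))"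
    by (auto simp: fun_eq_iff scaleR_sum_right)
  ultimately show ?thesis unfolding mtensor_def has_vector_derivative_def by simp
qed

lemma mtensor_Lin:
  fixes V :: "real \<Rightarrow> nat \<Rightarrow> cmat" and H :: "nat \<Rightarrow> nat \<Rightarrow> nat \<Rightarrow> complex"
  assumes a0: "a0 \<in> idxs (tdims m d1 d2)"
    and der: "\<And>p a b. p < m \<Longrightarrow> a < d1 p \<Longrightarrow> b < d2 p \<Longrightarrow> ((\<lambda>s. V s p a b) has_vector_derivative
       (apply4 (d1 p) (d2 p) (B j p) (V t p) a b
        + of_real \<kappa>1 * (\<Sum>c<d1 p. H (2*p) a c * V t p c b)
        + of_real \<kappa>2 * (\<Sum>c<d2 p. H (2*p+1) b c * V t p a c))) (at t within S)"
  shows "((\<lambda>s. mtensor m (V s) a0) has_vector_derivative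
           Lin (tdims m d1 d2) \<kappa>1 \<kappa>2 (free_flow m B j) H (mtensor m (V t)) a0) (at t within S)"
proof -
  let ?D = "tdims m d1 d2"
  let ?W = "mtensor m (V t)"
  let ?P = "\<lambda>q. \<Prod>l\<in>{..<m}-{q}. V t l (a0!(2*l)) (a0!(2*l+1))"
  let ?R = "\<lambda>p. apply4 (d1 p) (d2 p) (B j p) (V t p) (a0!(2*p)) (a0!(2*p+1))
        + of_real \<kappa>1 * (\<Sum>c<d1 p. H (2*p) (a0!(2*p)) c * V t p c (a0!(2*p+1)))
        + of_real \<kappa>2 * (\<Sum>c<d2 p. H (2*p+1) (a0!(2*p+1)) c * V t p (a0!(2*p)) c)"
  have la0: "length a0 = 2*m" using idxs_length[OF a0] by simp
  have bnd: "a0!(2*p) < d1 p" "a0!(2*p+1) < d2 p" if "p < m" for p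
    using idxs_nth[OF a0, of "2*p"] idxs_nth[OF a0, of "2*p+1"] that by auto
  have "((\<lambda>s. mtensor m (V s) a0) has_vector_derivative (\<Sum>q<m. ?R q * ?P q)) (at t within S)"
    by (rule mtensor_deriv) (use der bnd in auto)
  moreover have "(\<Sum>q<m. ?R q * ?P q) = Lin ?D \<kappa>1 \<kappa>2 (free_flow m B j) H ?W a0"
  proof -
    have e1: "?W (a0[2*q := c]) = V t q c (a0!(2*q+1)) * ?P q" if "q < m" for q c
      using mtensor_agree[OF that, of "a0[2*q := c]" a0 "V t"] that la0 by (auto simp: nth_list_update)
    have e2: "?W (a0[2*q+1 := c]) = V t q (a0!(2*q)) c * ?P q" if "q < m" for q c
      using mtensor_agree[OF that, of "a0[2*q+1 := c]" a0 "V t"] that la0 by (auto simp: nth_list_update)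
    have e3: "?W (a0[2*q := c, 2*q+1 := d]) = V t q c d * ?P q" if "q < m" for q c d
      using mtensor_agree[OF that, of "a0[2*q := c, 2*q+1 := d]" a0 "V t"] that la0 by (auto simp: nth_list_update)
    have "Lin ?D \<kappa>1 \<kappa>2 (free_flow m B j) H ?W a0
      = (\<Sum>k<m. \<Sum>c<d1 k. \<Sum>d<d2 k. B j k (a0!(2*k)) (a0!(2*k+1)) c d * ?W (a0[2*k := c, 2*k+1 := d]))
        + (\<Sum>q<m. of_real \<kappa>1 * (\<Sum>c<d1 q. H (2*q) (a0!(2*q)) c * ?W (a0[2*q := c]))
                 + of_real \<kappa>2 * (\<Sum>c<d2 q. H (2*q+1) (a0!(2*q+1)) c * ?W (a0[2*q+1 := c])))"
      unfolding Lin_def free_flow_sum[OF a0] length_tdims sum_even_odd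
      by (intro arg_cong2[where f="(+)"] refl sum.cong) (auto simp: kap_def)
    also have "\<dots> = (\<Sum>q<m. (\<Sum>c<d1 q. \<Sum>d<d2 q. B j q (a0!(2*q)) (a0!(2*q+1)) c d * V t q c d * ?P q)
        + (of_real \<kappa>1 * (\<Sum>c<d1 q. H (2*q) (a0!(2*q)) c * V t q c (a0!(2*q+1)) * ?P q)
           + of_real \<kappa>2 * (\<Sum>c<d2 q. H (2*q+1) (a0!(2*q+1)) c * V t q (a0!(2*q)) c * ?P q)))"
      unfolding sum.distrib[symmetric]
      by (rule sum.cong[OF refl]) (simp add: e1 e2[simplified] e3[simplified] mult.assoc)
    also have "\<dots> = (\<Sum>q<m. ?R q * ?P q)"
      by (rule sum.cong[OF refl]) (simp add: apply4_def sum_distrib_right sum_distrib_left algebra_simps)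
    finally show ?thesis by simp
  qed
  ultimately show ?thesis by simp
qed


definition Pm :: "nat \<Rightarrow> (nat \<Rightarrow> nat) \<Rightarrow> (nat \<Rightarrow> nat) \<Rightarrow> (nat \<Rightarrow> cmat) \<Rightarrow> (nat \<Rightarrow> cmat) \<Rightarrow> nat \<Rightarrow> complex" where
  "Pm m d1 d2 X Y p = (\<Prod>l\<in>{..<m}-{p}. frob_inner (d1 l) (d2 l) (X l) (Y l))"

lemma sum_delta_fst:
  fixes f :: "nat \<Rightarrow> nat \<Rightarrow> 'a::comm_monoid_add"
  assumes "c < n"
  shows "(\<Sum>x<n. \<Sum>y<k. if x = c then f x y else 0) = (\<Sum>y<k. f c y)"
proof -
  have "(\<Sum>x<n. \<Sum>y<k. if x = c then f x y else 0) = (\<Sum>x<n. if x = c then (\<Sum>y<k. f x y) else 0)"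
    by (rule sum.cong[OF refl]) auto
  also have "\<dots> = (\<Sum>y<k. f c y)" using assms by (simp add: sum.delta)
  finally show ?thesis .
qed

lemma sum_delta_snd:
  fixes f :: "nat \<Rightarrow> nat \<Rightarrow> 'a::comm_monoid_add"
  assumes "c < k"
  shows "(\<Sum>x<n. \<Sum>y<k. if y = c then f x y else 0) = (\<Sum>x<n. f x c)"
  using assms by (simp add: sum.delta)

lemma Xsum_even:
  fixes X Y :: "nat \<Rightarrow> cmat"
  assumes q: "q < m" and a: "a < d1 q" and c: "c < d1 q"
  shows "(\<Sum>a1\<in>{a1\<in>idxs (tdims m d1 d2). a1!(2*q) = c}. mtensor m Y (a1[2*q:=a]) * cnj (mtensor m X a1))
       = Pm m d1 d2 X Y q * (\<Sum>y<d2 q. Y q a y * cnj (X q c y))"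
proof -
  let ?D = "tdims m d1 d2"
  define g where "g p x y = (if p = q then (if x = c then Y q a y * cnj (X q x y) else 0) else Y p x y * cnj (X p x y))" for p x y
  have pw: "(if a1!(2*q) = c then mtensor m Y (a1[2*q:=a]) * cnj (mtensor m X a1) else 0)
        = (\<Prod>p<m. g p (a1!(2*p)) (a1!(2*p+1)))" if a1: "a1 \<in> idxs ?D" for a1
  proof -
    have la1: "length a1 = 2*m" using idxs_length[OF a1] by simp
    have m1: "mtensor m Y (a1[2*q:=a]) = Y q a (a1!(2*q+1)) * (\<Prod>l\<in>{..<m}-{q}. Y l (a1!(2*l)) (a1!(2*l+1)))"
      using mtensor_agree[OF q, of "a1[2*q:=a]" a1 Y] q la1 by (auto simp: nth_list_update)
    have m2: "mtensor m X a1 = X q (a1!(2*q)) (a1!(2*q+1)) * (\<Prod>l\<in>{..<m}-{q}. X l (a1!(2*l)) (a1!(2*l+1)))"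
      using mtensor_agree[OF q, of a1 a1 X] by auto
    have "(\<Prod>p<m. g p (a1!(2*p)) (a1!(2*p+1))) = g q (a1!(2*q)) (a1!(2*q+1)) * (\<Prod>p\<in>{..<m}-{q}. g p (a1!(2*p)) (a1!(2*p+1)))"
      by (rule prod.remove) (use q in auto)
    also have "(\<Prod>p\<in>{..<m}-{q}. g p (a1!(2*p)) (a1!(2*p+1)))
        = (\<Prod>l\<in>{..<m}-{q}. Y l (a1!(2*l)) (a1!(2*l+1))) * (\<Prod>l\<in>{..<m}-{q}. cnj (X l (a1!(2*l)) (a1!(2*l+1))))"
      by (simp add: g_def prod.distrib[symmetric])
    finally show ?thesis unfolding m1 m2 by (simp add: g_def algebra_simps)
  qed
  have "(\<Sum>a1\<in>{a1\<in>idxs ?D. a1!(2*q) = c}. mtensor m Y (a1[2*q:=a]) * cnj (mtensor m X a1))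
      = (\<Sum>a1\<in>idxs ?D. if a1!(2*q) = c then mtensor m Y (a1[2*q:=a]) * cnj (mtensor m X a1) else 0)"
    by (rule sum.inter_filter) simp
  also have "\<dots> = (\<Sum>a1\<in>idxs ?D. \<Prod>p<m. g p (a1!(2*p)) (a1!(2*p+1)))"
    by (rule sum.cong[OF refl]) (rule pw)
  also have "\<dots> = (\<Prod>p<m. \<Sum>x<d1 p. \<Sum>y<d2 p. g p x y)"
    by (rule sum_idxs_prod)
  also have "\<dots> = (\<Sum>x<d1 q. \<Sum>y<d2 q. g q x y) * (\<Prod>p\<in>{..<m}-{q}. \<Sum>x<d1 p. \<Sum>y<d2 p. g p x y)"
    by (rule prod.remove) (use q in auto)
  also have "(\<Sum>x<d1 q. \<Sum>y<d2 q. g q x y) = (\<Sum>y<d2 q. Y q a y * cnj (X q c y))"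
    unfolding g_def using sum_delta_fst[OF c, of "\<lambda>x y. Y q a y * cnj (X q x y)"] by simp
  also have "(\<Prod>p\<in>{..<m}-{q}. \<Sum>x<d1 p. \<Sum>y<d2 p. g p x y) = Pm m d1 d2 X Y q"
    unfolding Pm_def frob_inner_def by (rule prod.cong[OF refl]) (auto simp: g_def mult.commute)
  finally show ?thesis by (simp add: mult.commute)
qed

lemma Xsum_odd:
  fixes X Y :: "nat \<Rightarrow> cmat"
  assumes q: "q < m" and b: "b < d2 q" and c: "c < d2 q"
  shows "(\<Sum>a1\<in>{a1\<in>idxs (tdims m d1 d2). a1!(2*q+1) = c}. mtensor m Y (a1[2*q+1:=b]) * cnj (mtensor m X a1))
       = Pm m d1 d2 X Y q * (\<Sum>x<d1 q. Y q x b * cnj (X q x c))"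
proof -
  let ?D = "tdims m d1 d2"
  define g where "g p x y = (if p = q then (if y = c then Y q x b * cnj (X q x y) else 0) else Y p x y * cnj (X p x y))" for p x y
  have pw: "(if a1!(2*q+1) = c then mtensor m Y (a1[2*q+1:=b]) * cnj (mtensor m X a1) else 0)
        = (\<Prod>p<m. g p (a1!(2*p)) (a1!(2*p+1)))" if a1: "a1 \<in> idxs ?D" for a1
  proof -
    have la1: "length a1 = 2*m" using idxs_length[OF a1] by simp
    have m1: "mtensor m Y (a1[2*q+1:=b]) = Y q (a1!(2*q)) b * (\<Prod>l\<in>{..<m}-{q}. Y l (a1!(2*l)) (a1!(2*l+1)))"
      using mtensor_agree[OF q, of "a1[2*q+1:=b]" a1 Y] q la1 by (auto simp: nth_list_update)
    have m2: "mtensor m X a1 = X q (a1!(2*q)) (a1!(2*q+1)) * (\<Prod>l\<in>{..<m}-{q}. X l (a1!(2*l)) (a1!(2*l+1)))"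
      using mtensor_agree[OF q, of a1 a1 X] by auto
    have "(\<Prod>p<m. g p (a1!(2*p)) (a1!(2*p+1))) = g q (a1!(2*q)) (a1!(2*q+1)) * (\<Prod>p\<in>{..<m}-{q}. g p (a1!(2*p)) (a1!(2*p+1)))"
      by (rule prod.remove) (use q in auto)
    also have "(\<Prod>p\<in>{..<m}-{q}. g p (a1!(2*p)) (a1!(2*p+1)))
        = (\<Prod>l\<in>{..<m}-{q}. Y l (a1!(2*l)) (a1!(2*l+1))) * (\<Prod>l\<in>{..<m}-{q}. cnj (X l (a1!(2*l)) (a1!(2*l+1))))"
      by (simp add: g_def prod.distrib[symmetric])
    finally show ?thesis unfolding m1 m2 by (simp add: g_def algebra_simps)
  qed
  have "(\<Sum>a1\<in>{a1\<in>idxs ?D. a1!(2*q+1) = c}. mtensor m Y (a1[2*q+1:=b]) * cnj (mtensor m X a1))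
      = (\<Sum>a1\<in>idxs ?D. if a1!(2*q+1) = c then mtensor m Y (a1[2*q+1:=b]) * cnj (mtensor m X a1) else 0)"
    by (rule sum.inter_filter) simp
  also have "\<dots> = (\<Sum>a1\<in>idxs ?D. \<Prod>p<m. g p (a1!(2*p)) (a1!(2*p+1)))"
    by (rule sum.cong[OF refl]) (rule pw)
  also have "\<dots> = (\<Prod>p<m. \<Sum>x<d1 p. \<Sum>y<d2 p. g p x y)"
    by (rule sum_idxs_prod)
  also have "\<dots> = (\<Sum>x<d1 q. \<Sum>y<d2 q. g q x y) * (\<Prod>p\<in>{..<m}-{q}. \<Sum>x<d1 p. \<Sum>y<d2 p. g p x y)"
    by (rule prod.remove) (use q in auto)
  also have "(\<Sum>x<d1 q. \<Sum>y<d2 q. g q x y) = (\<Sum>x<d1 q. Y q x b * cnj (X q x c))"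
    unfolding g_def using sum_delta_snd[OF c, where n="d1 q" and f="\<lambda>x y. Y q x b * cnj (X q x y)"] by simp
  also have "(\<Prod>p\<in>{..<m}-{q}. \<Sum>x<d1 p. \<Sum>y<d2 p. g p x y) = Pm m d1 d2 X Y q"
    unfolding Pm_def frob_inner_def by (rule prod.cong[OF refl]) (auto simp: g_def mult.commute)
  finally show ?thesis by (simp add: mult.commute)
qed


definition H1m :: "nat \<Rightarrow> nat \<Rightarrow> (nat \<Rightarrow> nat) \<Rightarrow> (nat \<Rightarrow> nat) \<Rightarrow> (nat \<Rightarrow> nat \<Rightarrow> cmat) \<Rightarrow> nat \<Rightarrow> nat \<Rightarrow> nat \<Rightarrow> nat \<Rightarrow> complex" where
  "H1m N m d1 d2 U j q a c = (\<Sum>k<N. Pm m d1 d2 (U j) (U k) q * (\<Sum>y<d2 q. U k q a y * cnj (U j q c y))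
       - Pm m d1 d2 (U k) (U j) q * (\<Sum>y<d2 q. U j q a y * cnj (U k q c y))) / of_nat N"

definition H2m :: "nat \<Rightarrow> nat \<Rightarrow> (nat \<Rightarrow> nat) \<Rightarrow> (nat \<Rightarrow> nat) \<Rightarrow> (nat \<Rightarrow> nat \<Rightarrow> cmat) \<Rightarrow> nat \<Rightarrow> nat \<Rightarrow> nat \<Rightarrow> nat \<Rightarrow> complex" where
  "H2m N m d1 d2 U j q b c = (\<Sum>k<N. Pm m d1 d2 (U j) (U k) q * (\<Sum>x<d1 q. U k q x b * cnj (U j q x c))
       - Pm m d1 d2 (U k) (U j) q * (\<Sum>x<d1 q. U j q x b * cnj (U k q x c))) / of_nat N"

definition Hm :: "nat \<Rightarrow> nat \<Rightarrow> (nat \<Rightarrow> nat) \<Rightarrow> (nat \<Rightarrow> nat) \<Rightarrow> (nat \<Rightarrow> nat \<Rightarrow> cmat) \<Rightarrow> nat \<Rightarrow> nat \<Rightarrow> nat \<Rightarrow> nat \<Rightarrow> complex" where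
  "Hm N m d1 d2 U j r a c = (if even r then H1m N m d1 d2 U j (r div 2) a c else H2m N m d1 d2 U j (r div 2) a c)"

lemma Hg_prod_gen:
  fixes U :: "nat \<Rightarrow> nat \<Rightarrow> cmat"
  assumes T: "\<And>k a. k < N \<Longrightarrow> a \<in> idxs D \<Longrightarrow> T k a = mtensor m (U k) a"
    and r: "r < length D" and a: "a < D!r"
    and XS: "\<And>k. (\<Sum>a1\<in>{a1\<in>idxs D. a1!r = c}. mtensor m (U k) (a1[r:=a]) * cnj (mtensor m (U j) a1)) = F k"
    and YS: "\<And>k. (\<Sum>a1\<in>{a1\<in>idxs D. a1!r = c}. mtensor m (U j) (a1[r:=a]) * cnj (mtensor m (U k) a1)) = G k"
    and j: "j < N"
  shows "Hg D (T j) (\<lambda>a. (\<Sum>k<N. T k a) / of_nat N) r a c = (\<Sum>k<N. F k - G k) / of_nat N"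
proof -
  let ?S = "{a1\<in>idxs D. a1!r = c}"
  have "Hg D (T j) (\<lambda>a. (\<Sum>k<N. T k a) / of_nat N) r a c
      = (\<Sum>a1\<in>?S. (\<Sum>k<N. mtensor m (U k) (a1[r:=a]) * cnj (mtensor m (U j) a1)
                          - mtensor m (U j) (a1[r:=a]) * cnj (mtensor m (U k) a1)) / of_nat N)"
    unfolding Hg_def
  proof (rule sum.cong[OF refl])
    fix a1 assume "a1 \<in> ?S"
    then have a1: "a1 \<in> idxs D" "a1[r:=a] \<in> idxs D" using idxs_upd[of a1 D a r] a by auto
    show "(\<Sum>k<N. T k (a1[r := a])) / of_nat N * cnj (T j a1) - T j (a1[r := a]) * cnj ((\<Sum>k<N. T k a1) / of_nat N)
        = (\<Sum>k<N. mtensor m (U k) (a1[r:=a]) * cnj (mtensor m (U j) a1)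
                          - mtensor m (U j) (a1[r:=a]) * cnj (mtensor m (U k) a1)) / of_nat N"
    proof -
      have e1: "(\<Sum>k<N. T k (a1[r := a])) / of_nat N * cnj (T j a1)
          = (\<Sum>k<N. mtensor m (U k) (a1[r:=a]) * cnj (mtensor m (U j) a1)) / of_nat N"
        using a1 j by (simp add: T sum_distrib_right)
      have e2: "T j (a1[r := a]) * cnj ((\<Sum>k<N. T k a1) / of_nat N)
          = (\<Sum>k<N. mtensor m (U j) (a1[r:=a]) * cnj (mtensor m (U k) a1)) / of_nat N"
        using a1 j by (simp add: T sum_distrib_left)
      show ?thesis unfolding e1 e2 sum_subtractf diff_divide_distrib ..
    qed
  qed
  also have "\<dots> = (\<Sum>k<N. (\<Sum>a1\<in>?S. mtensor m (U k) (a1[r:=a]) * cnj (mtensor m (U j) a1))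
                        - (\<Sum>a1\<in>?S. mtensor m (U j) (a1[r:=a]) * cnj (mtensor m (U k) a1))) / of_nat N"
    by (simp add: sum_divide_distrib[symmetric] sum_subtractf sum.swap[of _ ?S])
  also have "\<dots> = (\<Sum>k<N. F k - G k) / of_nat N" by (simp add: XS YS)
  finally show ?thesis .
qed

lemma Hg_prod:
  fixes U :: "nat \<Rightarrow> nat \<Rightarrow> cmat"
  assumes T: "\<And>k a. k < N \<Longrightarrow> a \<in> idxs (tdims m d1 d2) \<Longrightarrow> T k a = mtensor m (U k) a"
    and r: "r < 2*m" and a: "a < tdims m d1 d2 ! r" and c: "c < tdims m d1 d2 ! r" and j: "j < N"
  shows "Hg (tdims m d1 d2) (T j) (\<lambda>a. (\<Sum>k<N. T k a) / of_nat N) r a c = Hm N m d1 d2 U j r a c"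
proof (cases "even r")
  case True
  then obtain q where q: "r = 2*q" by blast
  have qm: "q < m" using r q by simp
  have X: "(\<Sum>a1\<in>{a1\<in>idxs (tdims m d1 d2). a1!r = c}. mtensor m (U k) (a1[r:=a]) * cnj (mtensor m (U j) a1))
      = Pm m d1 d2 (U j) (U k) q * (\<Sum>y<d2 q. U k q a y * cnj (U j q c y))" for k
    unfolding q by (rule Xsum_even) (use qm a c q in simp_all)
  have Y: "(\<Sum>a1\<in>{a1\<in>idxs (tdims m d1 d2). a1!r = c}. mtensor m (U j) (a1[r:=a]) * cnj (mtensor m (U k) a1))
      = Pm m d1 d2 (U k) (U j) q * (\<Sum>y<d2 q. U j q a y * cnj (U k q c y))" for k
    unfolding q by (rule Xsum_even) (use qm a c q in simp_all)
  have "Hg (tdims m d1 d2) (T j) (\<lambda>a. (\<Sum>k<N. T k a) / of_nat N) r a c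
     = (\<Sum>k<N. Pm m d1 d2 (U j) (U k) q * (\<Sum>y<d2 q. U k q a y * cnj (U j q c y))
          - Pm m d1 d2 (U k) (U j) q * (\<Sum>y<d2 q. U j q a y * cnj (U k q c y))) / of_nat N"
    by (rule Hg_prod_gen[where F="\<lambda>k. Pm m d1 d2 (U j) (U k) q * (\<Sum>y<d2 q. U k q a y * cnj (U j q c y))"
          and G="\<lambda>k. Pm m d1 d2 (U k) (U j) q * (\<Sum>y<d2 q. U j q a y * cnj (U k q c y))", OF T _ a X Y j]) (use r in simp_all)
  then show ?thesis using True q by (simp add: Hm_def H1m_def)
next
  case False
  then obtain q where q: "r = 2*q+1" by (metis oddE)
  have qm: "q < m" using r q by simp
  have X: "(\<Sum>a1\<in>{a1\<in>idxs (tdims m d1 d2). a1!r = c}. mtensor m (U k) (a1[r:=a]) * cnj (mtensor m (U j) a1))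
      = Pm m d1 d2 (U j) (U k) q * (\<Sum>x<d1 q. U k q x a * cnj (U j q x c))" for k
    unfolding q by (rule Xsum_odd) (use qm a c q in simp_all)
  have Y: "(\<Sum>a1\<in>{a1\<in>idxs (tdims m d1 d2). a1!r = c}. mtensor m (U j) (a1[r:=a]) * cnj (mtensor m (U k) a1))
      = Pm m d1 d2 (U k) (U j) q * (\<Sum>x<d1 q. U j q x a * cnj (U k q x c))" for k
    unfolding q by (rule Xsum_odd) (use qm a c q in simp_all)
  have "Hg (tdims m d1 d2) (T j) (\<lambda>a. (\<Sum>k<N. T k a) / of_nat N) r a c
     = (\<Sum>k<N. Pm m d1 d2 (U j) (U k) q * (\<Sum>x<d1 q. U k q x a * cnj (U j q x c))
          - Pm m d1 d2 (U k) (U j) q * (\<Sum>x<d1 q. U j q x a * cnj (U k q x c))) / of_nat N"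
    by (rule Hg_prod_gen[where F="\<lambda>k. Pm m d1 d2 (U j) (U k) q * (\<Sum>x<d1 q. U k q x a * cnj (U j q x c))"
          and G="\<lambda>k. Pm m d1 d2 (U k) (U j) q * (\<Sum>x<d1 q. U j q x a * cnj (U k q x c))", OF T _ a X Y j]) (use r in simp_all)
  then show ?thesis using False q by (simp add: Hm_def H2m_def)
qed


lemma sum_div_swap:
  fixes F :: "'k \<Rightarrow> 'c \<Rightarrow> complex"
  shows "(\<Sum>c\<in>C. ((\<Sum>k\<in>K. F k c) / n) * G c) = (\<Sum>k\<in>K. \<Sum>c\<in>C. F k c * G c) / n"
proof -
  have "(\<Sum>c\<in>C. ((\<Sum>k\<in>K. F k c) / n) * G c) = (\<Sum>c\<in>C. \<Sum>k\<in>K. F k c * G c / n)"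
    by (simp add: sum_divide_distrib sum_distrib_right)
  also have "\<dots> = (\<Sum>k\<in>K. \<Sum>c\<in>C. F k c * G c / n)" by (rule sum.swap)
  also have "\<dots> = (\<Sum>k\<in>K. \<Sum>c\<in>C. F k c * G c) / n" by (simp add: sum_divide_distrib)
  finally show ?thesis .
qed

lemma sum_swap_mult:
  fixes F :: "'x \<Rightarrow> 'c \<Rightarrow> complex"
  shows "(\<Sum>c\<in>C. (\<Sum>x\<in>X. F x c) * G c) = (\<Sum>x\<in>X. \<Sum>c\<in>C. F x c * G c)"
  by (simp add: sum_distrib_right) (rule sum.swap)

lemma mm_rhs_eq:
  "mm_rhs N m d1 d2 \<kappa>1 \<kappa>2 B U j p a b
    = apply4 (d1 p) (d2 p) (B j p) (U j p) a b
      + of_real \<kappa>1 * (\<Sum>c<d1 p. H1m N m d1 d2 U j p a c * U j p c b)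
      + of_real \<kappa>2 * (\<Sum>c<d2 p. H2m N m d1 d2 U j p b c * U j p a c)"
proof -
  let ?P = "\<lambda>j k. Pm m d1 d2 (U j) (U k) p"
  let ?mm = "\<lambda>X Y Z. mat_mult (d1 p) (mat_mult (d2 p) X (adj Y)) Z"
  have P: "(\<lambda>j k. \<Prod>l\<in>{..<m} - {p}. frob_inner (d1 l) (d2 l) (U j l) (U k l)) = ?P"
    by (simp add: Pm_def)
  have mm: "?mm X Y Z a b = (\<Sum>c<d1 p. (\<Sum>y<d2 p. X a y * cnj (Y c y)) * Z c b)" for X Y Z
    by (simp add: mat_mult_def adj_def)
  have k1: "(\<Sum>c<d1 p. H1m N m d1 d2 U j p a c * U j p c b)
      = (\<Sum>k<N. ?P j k * ?mm (U k p) (U j p) (U j p) a b - ?P k j * ?mm (U j p) (U k p) (U j p) a b) / of_nat N"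
    unfolding H1m_def sum_div_swap mm
    by (simp only: sum_subtractf left_diff_distrib mult.assoc sum_distrib_left[symmetric])
  have k2: "(\<Sum>c<d2 p. H2m N m d1 d2 U j p b c * U j p a c)
      = (\<Sum>k<N. ?P j k * ?mm (U j p) (U j p) (U k p) a b - ?P k j * ?mm (U j p) (U k p) (U j p) a b) / of_nat N"
  proof -
    have s1: "(\<Sum>c<d2 p. (\<Sum>x<d1 p. U k p x b * cnj (U j p x c)) * U j p a c)
        = (\<Sum>x<d1 p. (\<Sum>y<d2 p. U j p a y * cnj (U j p x y)) * U k p x b)" for k
      unfolding sum_swap_mult by (rule trans[OF sum.swap]) (simp add: mult_ac)
    have s2: "(\<Sum>c<d2 p. (\<Sum>x<d1 p. U j p x b * cnj (U k p x c)) * U j p a c)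
        = (\<Sum>x<d1 p. (\<Sum>y<d2 p. U j p a y * cnj (U k p x y)) * U j p x b)" for k
      unfolding sum_swap_mult by (rule trans[OF sum.swap]) (simp add: mult_ac)
    show ?thesis
      unfolding H2m_def sum_div_swap mm
      by (simp add: sum_subtractf left_diff_distrib mult.assoc sum_distrib_left[symmetric] s1 s2)
  qed
  show ?thesis
    unfolding mm_rhs_def Let_def P k1 k2
    by (simp add: sum_subtractf[symmetric] of_real_divide)
qed


lemma Lin_cong:
  assumes a0: "a0 \<in> idxs D"
    and H: "\<And>r a c. r < length D \<Longrightarrow> a < D!r \<Longrightarrow> c < D!r \<Longrightarrow> H r a c = H' r a c"
    and X: "\<And>a. a \<in> idxs D \<Longrightarrow> X a = X' a"
  shows "Lin D \<kappa>1 \<kappa>2 A H X a0 = Lin D \<kappa>1 \<kappa>2 A H' X' a0"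
  unfolding Lin_def
  by (intro arg_cong2[where f="(+)"] sum.cong refl arg_cong2[where f="(*)"])
     (auto simp: X H idxs_nth[OF a0] idxs_upd[OF a0])

definition Kmat :: "(nat \<Rightarrow> nat \<Rightarrow> nat \<Rightarrow> nat \<Rightarrow> complex) \<Rightarrow> (nat \<Rightarrow> nat \<Rightarrow> complex) \<Rightarrow> (nat \<Rightarrow> nat \<Rightarrow> complex)
   \<Rightarrow> real \<Rightarrow> real \<Rightarrow> nat \<times> nat \<Rightarrow> nat \<times> nat \<Rightarrow> complex" where
  "Kmat Bp H1 H2 \<kappa>1 \<kappa>2 x y = (case x of (a, b) \<Rightarrow> case y of (c, d) \<Rightarrow>
      Bp a b c d + of_real \<kappa>1 * (if d = b then H1 a c else 0) + of_real \<kappa>2 * (if c = a then H2 b d else 0))"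

lemma sum_pair: "(\<Sum>y\<in>A\<times>B. f y) = (\<Sum>a\<in>A. \<Sum>b\<in>B. f (a,b))"
  by (simp add: sum.cartesian_product)

lemma Kmat_apply:
  assumes "a < n1" "b < n2"
  shows "(\<Sum>y\<in>{..<n1} \<times> {..<n2}. Kmat Bp H1 H2 \<kappa>1 \<kappa>2 (a, b) y * X (fst y) (snd y))
       = apply4 n1 n2 Bp X a b + of_real \<kappa>1 * (\<Sum>c<n1. H1 a c * X c b) + of_real \<kappa>2 * (\<Sum>c<n2. H2 b c * X a c)"
proof -
  have "(\<Sum>y\<in>{..<n1} \<times> {..<n2}. Kmat Bp H1 H2 \<kappa>1 \<kappa>2 (a, b) y * X (fst y) (snd y))
      = (\<Sum>c<n1. \<Sum>d<n2. Bp a b c d * X c d + of_real \<kappa>1 * ((if d = b then H1 a c else 0) * X c d)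
            + of_real \<kappa>2 * ((if c = a then H2 b d else 0) * X c d))"
    unfolding sum_pair by (simp add: Kmat_def algebra_simps)
  also have "\<dots> = apply4 n1 n2 Bp X a b + of_real \<kappa>1 * (\<Sum>c<n1. H1 a c * X c b) + of_real \<kappa>2 * (\<Sum>c<n2. H2 b c * X a c)"
    using assms
    by (simp add: sum.distrib apply4_def sum_distrib_left[symmetric] if_distrib[of "\<lambda>z. z * _"] sum.delta sum.swap[of _ "{..<n1}" "{..<n2}"] sum_delta_fst cong: if_cong)
  finally show ?thesis .
qed

lemma skew_re_zero:
  fixes K :: "'i \<Rightarrow> 'i \<Rightarrow> complex"
  assumes I: "finite I" and K: "\<And>x y. x \<in> I \<Longrightarrow> y \<in> I \<Longrightarrow> K x y = - cnj (K y x)"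
  shows "Re (\<Sum>x\<in>I. cnj (v x) * (\<Sum>y\<in>I. K x y * v y)) = 0"
proof -
  define z where "z = (\<Sum>x\<in>I. cnj (v x) * (\<Sum>y\<in>I. K x y * v y))"
  have "cnj z = (\<Sum>x\<in>I. \<Sum>y\<in>I. v x * cnj (K x y) * cnj (v y))"
    by (simp add: z_def sum_distrib_left mult.assoc)
  also have "\<dots> = (\<Sum>x\<in>I. \<Sum>y\<in>I. - (cnj (v y) * K y x * v x))"
  proof (intro sum.cong refl)
    fix x y assume "x \<in> I" "y \<in> I"
    then have "cnj (K x y) = - K y x" using K[of y x] by simp
    then show "v x * cnj (K x y) * cnj (v y) = - (cnj (v y) * K y x * v x)" by simp
  qed
  also have "\<dots> = - (\<Sum>y\<in>I. \<Sum>x\<in>I. cnj (v y) * K y x * v x)"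
    by (subst sum.swap) (simp add: sum_negf)
  also have "\<dots> = - z" by (simp add: z_def sum_distrib_left mult.assoc)
  finally have "cnj z = - z" .
  then have "Re (cnj z) = Re (- z)" by simp
  then have "Re z = 0" by simp
  then show ?thesis unfolding z_def .
qed


lemma frob_inner_cnj: "cnj (frob_inner n1 n2 X Y) = frob_inner n1 n2 Y X"
  by (simp add: frob_inner_def mult.commute)

lemma Pm_cnj: "cnj (Pm m d1 d2 X Y p) = Pm m d1 d2 Y X p"
  by (simp add: Pm_def frob_inner_cnj)

lemma H1m_antiherm: "H1m N m d1 d2 U j p a c = - cnj (H1m N m d1 d2 U j p c a)"
proof -
  have "cnj (H1m N m d1 d2 U j p c a) = (\<Sum>k<N. Pm m d1 d2 (U k) (U j) p * (\<Sum>y<d2 p. U j p a y * cnj (U k p c y))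
       - Pm m d1 d2 (U j) (U k) p * (\<Sum>y<d2 p. U k p a y * cnj (U j p c y))) / of_nat N"
    unfolding H1m_def by (simp add: Pm_cnj mult.commute)
  also have "\<dots> = - H1m N m d1 d2 U j p a c"
    unfolding H1m_def by (simp add: sum_subtractf diff_divide_distrib)
  finally show ?thesis by simp
qed

lemma H2m_antiherm: "H2m N m d1 d2 U j p a c = - cnj (H2m N m d1 d2 U j p c a)"
proof -
  have "cnj (H2m N m d1 d2 U j p c a) = (\<Sum>k<N. Pm m d1 d2 (U k) (U j) p * (\<Sum>x<d1 p. U j p x a * cnj (U k p x c))
       - Pm m d1 d2 (U j) (U k) p * (\<Sum>x<d1 p. U k p x a * cnj (U j p x c))) / of_nat N"
    unfolding H2m_def by (simp add: Pm_cnj mult.commute)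
  also have "\<dots> = - H2m N m d1 d2 U j p a c"
    unfolding H2m_def by (simp add: sum_subtractf diff_divide_distrib)
  finally show ?thesis by simp
qed

lemma Kmat_skew:
  assumes B: "\<And>a1 b1 a2 b2. a1 < n1 \<Longrightarrow> b1 < n2 \<Longrightarrow> a2 < n1 \<Longrightarrow> b2 < n2 \<Longrightarrow> Bp a1 b1 a2 b2 = - cnj (Bp a2 b2 a1 b1)"
    and H1: "\<And>a c. H1 a c = - cnj (H1 c a)" and H2: "\<And>a c. H2 a c = - cnj (H2 c a)"
    and x: "x \<in> {..<n1} \<times> {..<n2}" and y: "y \<in> {..<n1} \<times> {..<n2}"
  shows "Kmat Bp H1 H2 \<kappa>1 \<kappa>2 x y = - cnj (Kmat Bp H1 H2 \<kappa>1 \<kappa>2 y x)"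
proof -
  obtain a b c d where xy: "x = (a, b)" "y = (c, d)" by (cases x, cases y)
  have "cnj (Bp c d a b) = - Bp a b c d" using B[of a b c d] x y xy by auto
  moreover have "cnj (H1 c a) = - H1 a c" "cnj (H2 d b) = - H2 b d"
    using H1[of a c] H2[of b d] by auto
  ultimately show ?thesis unfolding xy Kmat_def by (simp add: algebra_simps)
qed

lemma deriv_zero_const:
  fixes f :: "real \<Rightarrow> real"
  assumes "\<And>s. s \<ge> 0 \<Longrightarrow> (f has_real_derivative 0) (at s within {0..})" and "t \<ge> 0"
  shows "f t = f 0"
proof -
  have "\<exists>c. \<forall>x\<in>{0..}. f x = c"
  proof (rule has_derivative_zero_constant)
    fix x :: real assume "x \<in> {0..}"
    then have "(f has_derivative (*) 0) (at x within {0..})"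
      using assms(1) by (auto simp: has_field_derivative_def)
    moreover have "((*) (0::real)) = (\<lambda>h. 0)" by auto
    ultimately show "(f has_derivative (\<lambda>h. 0)) (at x within {0..})" by simp
  qed simp
  then show ?thesis using assms(2) by force
qed

lemma mm_deriv_K:
  assumes sol: "mm_solution N m d1 d2 \<kappa>1 \<kappa>2 B U" and j: "j < N" and p: "p < m" and s: "s \<ge> 0"
    and x: "x \<in> {..<d1 p} \<times> {..<d2 p}"
  shows "((\<lambda>s. U j p s (fst x) (snd x)) has_vector_derivative
    (\<Sum>y\<in>{..<d1 p} \<times> {..<d2 p}. Kmat (B j p) (H1m N m d1 d2 (\<lambda>j' p'. U j' p' s) j p)
        (H2m N m d1 d2 (\<lambda>j' p'. U j' p' s) j p) \<kappa>1 \<kappa>2 x y * U j p s (fst y) (snd y))) (at s within {0..})"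
proof -
  obtain a b where ab: "x = (a, b)" by (cases x)
  have "((\<lambda>s. U j p s a b) has_vector_derivative mm_rhs N m d1 d2 \<kappa>1 \<kappa>2 B (\<lambda>j' p'. U j' p' s) j p a b) (at s within {0..})"
    using sol j p s x ab unfolding mm_solution_def by auto
  then show ?thesis using x ab by (simp add: Kmat_apply mm_rhs_eq)
qed

lemma sum_re_cnj:
  "(\<Sum>x\<in>I. 2 * (Re (v x) * Re (w x) + Im (v x) * Im (w x))) = 2 * Re (\<Sum>x\<in>I. cnj (v x) * w x)"
  by (simp add: Re_sum sum_distrib_left)

lemma mm_norm:
  assumes sol: "mm_solution N m d1 d2 \<kappa>1 \<kappa>2 B U"
    and skew: "\<forall>j<N. \<forall>p<m. \<forall>a1<d1 p. \<forall>b1<d2 p. \<forall>a2<d1 p. \<forall>b2<d2 p.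
           B j p a1 b1 a2 b2 = - cnj (B j p a2 b2 a1 b1)"
    and j: "j < N" and p: "p < m" and t: "t \<ge> 0"
  shows "frob_norm (d1 p) (d2 p) (U j p t) = frob_norm (d1 p) (d2 p) (U j p 0)"
proof -
  let ?I = "{..<d1 p} \<times> {..<d2 p}"
  define f where "f s = (\<Sum>x\<in>?I. (cmod (U j p s (fst x) (snd x)))^2)" for s
  let ?K = "\<lambda>s. Kmat (B j p) (H1m N m d1 d2 (\<lambda>j' p'. U j' p' s) j p) (H2m N m d1 d2 (\<lambda>j' p'. U j' p' s) j p) \<kappa>1 \<kappa>2"
  have fn: "frob_norm (d1 p) (d2 p) (U j p s) = sqrt (f s)" for s
    by (simp add: frob_norm_def f_def sum_pair)
  have "(f has_real_derivative 0) (at s within {0..})" if s: "s \<ge> 0" for s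
  proof -
    let ?v = "\<lambda>x. U j p s (fst x) (snd x)"
    let ?d = "\<lambda>x. \<Sum>y\<in>?I. ?K s x y * ?v y"
    have "(f has_real_derivative (\<Sum>x\<in>?I. 2 * (Re (?v x) * Re (?d x) + Im (?v x) * Im (?d x)))) (at s within {0..})"
      unfolding f_def
      by (rule DERIV_sum, rule cmod_sq_deriv, rule mm_deriv_K[OF sol j p s]) auto
    moreover have "(\<Sum>x\<in>?I. 2 * (Re (?v x) * Re (?d x) + Im (?v x) * Im (?d x)))
        = 2 * Re (\<Sum>x\<in>?I. cnj (?v x) * ?d x)"
      by (rule sum_re_cnj)
    moreover have "Re (\<Sum>x\<in>?I. cnj (?v x) * ?d x) = 0"
    proof (rule skew_re_zero, simp, rule Kmat_skew[OF _ H1m_antiherm H2m_antiherm])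
      show "\<And>a1 b1 a2 b2. a1 < d1 p \<Longrightarrow> b1 < d2 p \<Longrightarrow> a2 < d1 p \<Longrightarrow> b2 < d2 p \<Longrightarrow>
          B j p a1 b1 a2 b2 = - cnj (B j p a2 b2 a1 b1)" using skew j p by blast
    qed
    ultimately show ?thesis by simp
  qed
  then have "f t = f 0" using deriv_zero_const t by blast
  then show ?thesis by (simp add: fn)
qed


lemma part1:
  assumes sol: "mm_solution N m d1 d2 \<kappa>1 \<kappa>2 B U"
  shows "lohe_solution N (tdims m d1 d2) (kappa_coupling m \<kappa>1 \<kappa>2) (free_flow m B)
            (\<lambda>i t. mtensor m (\<lambda>p. U i p t))"
  unfolding lohe_solution_def
proof (intro allI impI ballI)
  fix t :: real and j a0
  assume t: "0 \<le> t" and j: "j < N" and a0: "a0 \<in> idxs (tdims m d1 d2)"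
  let ?D = "tdims m d1 d2"
  let ?Ut = "\<lambda>j' p'. U j' p' t"
  let ?T = "\<lambda>k. mtensor m (?Ut k)"
  have "lohe_rhs ?D (kappa_coupling m \<kappa>1 \<kappa>2) (free_flow m B j) (?T j) (\<lambda>a. (\<Sum>k<N. ?T k a) / of_nat N) a0
      = Lin ?D \<kappa>1 \<kappa>2 (free_flow m B j) (\<lambda>r. Hg ?D (?T j) (\<lambda>a. (\<Sum>k<N. ?T k a) / of_nat N) r) (?T j) a0"
    by (rule lohe_rhs_Lin[OF a0])
  also have "\<dots> = Lin ?D \<kappa>1 \<kappa>2 (free_flow m B j) (Hm N m d1 d2 ?Ut j) (?T j) a0"
    by (rule Lin_cong[OF a0]) (auto intro!: Hg_prod j)
  finally have rhs: "lohe_rhs ?D (kappa_coupling m \<kappa>1 \<kappa>2) (free_flow m B j) (?T j) (\<lambda>a. (\<Sum>k<N. ?T k a) / of_nat N) a0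
      = Lin ?D \<kappa>1 \<kappa>2 (free_flow m B j) (Hm N m d1 d2 ?Ut j) (?T j) a0" .
  have "((\<lambda>s. mtensor m ((\<lambda>s p. U j p s) s) a0) has_vector_derivative
      Lin ?D \<kappa>1 \<kappa>2 (free_flow m B j) (Hm N m d1 d2 ?Ut j) (mtensor m ((\<lambda>s p. U j p s) t)) a0) (at t within {0..})"
  proof (rule mtensor_Lin[OF a0])
    fix p a b assume p: "p < m" and a: "a < d1 p" and b: "b < d2 p"
    have "((\<lambda>s. U j p s a b) has_vector_derivative mm_rhs N m d1 d2 \<kappa>1 \<kappa>2 B ?Ut j p a b) (at t within {0..})"
      using sol t j p a b unfolding mm_solution_def by blast
    then show "((\<lambda>s. (\<lambda>s p. U j p s) s p a b) has_vector_derivative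
         apply4 (d1 p) (d2 p) (B j p) ((\<lambda>s p. U j p s) t p) a b
         + of_real \<kappa>1 * (\<Sum>c<d1 p. Hm N m d1 d2 ?Ut j (2*p) a c * (\<lambda>s p. U j p s) t p c b)
         + of_real \<kappa>2 * (\<Sum>c<d2 p. Hm N m d1 d2 ?Ut j (2*p+1) b c * (\<lambda>s p. U j p s) t p a c)) (at t within {0..})"
      by (simp add: mm_rhs_eq Hm_def)
  qed
  then show "((\<lambda>s. mtensor m (\<lambda>p. U j p s) a0) has_vector_derivative
      lohe_rhs ?D (kappa_coupling m \<kappa>1 \<kappa>2) (free_flow m B j) (mtensor m (\<lambda>p. U j p t))
        (\<lambda>a. (\<Sum>k<N. mtensor m (\<lambda>p. U k p t) a) / of_nat N) a0) (at t within {0..})"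
    using rhs by simp
qed


lemma Lin_diff:
  "Lin D \<kappa>1 \<kappa>2 A H X a0 - Lin D \<kappa>1 \<kappa>2 A H Y a0 = Lin D \<kappa>1 \<kappa>2 A H (\<lambda>a. X a - Y a) a0"
  by (simp add: Lin_def sum_subtractf right_diff_distrib algebra_simps)

lemma Lin_bound:
  assumes a0: "a0 \<in> idxs D"
  shows "cmod (Lin D \<kappa>1 \<kappa>2 A H X a0)
     \<le> ((\<Sum>a1\<in>idxs D. cmod (A a0 a1)) + (\<Sum>r<length D. \<bar>kap \<kappa>1 \<kappa>2 r\<bar> * (\<Sum>c<D!r. cmod (H r (a0!r) c))))
        * (\<Sum>b\<in>idxs D. cmod (X b))"
proof -
  let ?S = "\<Sum>b\<in>idxs D. cmod (X b)"
  have Xb: "cmod (X b) \<le> ?S" if "b \<in> idxs D" for b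
    by (rule member_le_sum) (use that in auto)
  have S0: "?S \<ge> 0" by (auto intro: sum_nonneg)
  have 1: "cmod (\<Sum>a1\<in>idxs D. A a0 a1 * X a1) \<le> (\<Sum>a1\<in>idxs D. cmod (A a0 a1)) * ?S"
  proof -
    have "cmod (\<Sum>a1\<in>idxs D. A a0 a1 * X a1) \<le> (\<Sum>a1\<in>idxs D. cmod (A a0 a1) * cmod (X a1))"
      by (rule order_trans[OF norm_sum]) (simp add: norm_mult)
    also have "\<dots> \<le> (\<Sum>a1\<in>idxs D. cmod (A a0 a1) * ?S)"
      by (rule sum_mono, rule mult_left_mono) (use Xb in auto)
    finally show ?thesis by (simp add: sum_distrib_right)
  qed
  have 2: "cmod (\<Sum>r<length D. of_real (kap \<kappa>1 \<kappa>2 r) * (\<Sum>c<D!r. H r (a0!r) c * X (a0[r:=c])))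
      \<le> (\<Sum>r<length D. \<bar>kap \<kappa>1 \<kappa>2 r\<bar> * (\<Sum>c<D!r. cmod (H r (a0!r) c))) * ?S"
  proof -
    have "cmod (\<Sum>r<length D. of_real (kap \<kappa>1 \<kappa>2 r) * (\<Sum>c<D!r. H r (a0!r) c * X (a0[r:=c])))
        \<le> (\<Sum>r<length D. \<bar>kap \<kappa>1 \<kappa>2 r\<bar> * cmod (\<Sum>c<D!r. H r (a0!r) c * X (a0[r:=c])))"
      by (rule order_trans[OF norm_sum]) (simp add: norm_mult)
    also have "\<dots> \<le> (\<Sum>r<length D. \<bar>kap \<kappa>1 \<kappa>2 r\<bar> * ((\<Sum>c<D!r. cmod (H r (a0!r) c)) * ?S))"
    proof (rule sum_mono, rule mult_left_mono)
      fix r assume "r \<in> {..<length D}"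
      have "cmod (\<Sum>c<D!r. H r (a0!r) c * X (a0[r:=c])) \<le> (\<Sum>c<D!r. cmod (H r (a0!r) c) * cmod (X (a0[r:=c])))"
        by (rule order_trans[OF norm_sum]) (simp add: norm_mult)
      also have "\<dots> \<le> (\<Sum>c<D!r. cmod (H r (a0!r) c) * ?S)"
        by (rule sum_mono, rule mult_left_mono) (use Xb idxs_upd[OF a0] in auto)
      finally show "cmod (\<Sum>c<D!r. H r (a0!r) c * X (a0[r:=c])) \<le> (\<Sum>c<D!r. cmod (H r (a0!r) c)) * ?S"
        by (simp add: sum_distrib_right)
    qed simp
    finally show ?thesis by (simp add: sum_distrib_right mult.assoc)
  qed
  show ?thesis
    unfolding Lin_def
    by (rule order_trans[OF norm_triangle_ineq]) (use 1 2 in \<open>simp add: distrib_right\<close>)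
qed

lemma deriv_cont_on:
  assumes "\<And>t. t \<ge> 0 \<Longrightarrow> (f has_vector_derivative f' t) (at t within {0..})"
  shows "continuous_on {0..} f"
  unfolding continuous_on_eq_continuous_within
  using assms by (auto intro: has_vector_derivative_continuous)

lemma Hg_cont:
  fixes T :: "real \<Rightarrow> nat \<Rightarrow> nat list \<Rightarrow> complex"
  assumes cT: "\<And>k a. k < N \<Longrightarrow> a \<in> idxs D \<Longrightarrow> continuous_on {0..} (\<lambda>t. T t k a)"
    and j: "j < N" and a: "a < D!r"
  shows "continuous_on {0..} (\<lambda>t. Hg D (T t j) (\<lambda>a. (\<Sum>k<N. T t k a) / of_nat N) r a c)"
  unfolding Hg_def
proof (rule continuous_on_sum)
  fix a1 assume "a1 \<in> {a1 \<in> idxs D. a1 ! r = c}"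
  then have a1: "a1 \<in> idxs D" "a1[r:=a] \<in> idxs D" using idxs_upd[of a1 D a r] a by auto
  show "continuous_on {0..} (\<lambda>t. (\<Sum>k<N. T t k (a1[r := a])) / of_nat N * cnj (T t j a1)
        - T t j (a1[r := a]) * cnj ((\<Sum>k<N. T t k a1) / of_nat N))"
    by (intro continuous_intros cT a1 j) (use j in auto)
qed


lemma part2:
  fixes T :: "nat \<Rightarrow> real \<Rightarrow> nat list \<Rightarrow> complex" and U0 :: "nat \<Rightarrow> nat \<Rightarrow> cmat"
  assumes Bskew: "\<forall>j<N. \<forall>p<m. \<forall>a1<d1 p. \<forall>b1<d2 p. \<forall>a2<d1 p. \<forall>b2<d2 p.
           B j p a1 b1 a2 b2 = - cnj (B j p a2 b2 a1 b1)"
    and sol: "lohe_solution N (tdims m d1 d2) (kappa_coupling m \<kappa>1 \<kappa>2) (free_flow m B) T"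
    and U0n: "\<forall>i<N. \<forall>p<m. frob_norm (d1 p) (d2 p) (U0 i p) = 1"
    and T0: "\<forall>i<N. \<forall>a\<in>idxs (tdims m d1 d2). T i 0 a = mtensor m (U0 i) a"
  shows "\<exists>U. mm_solution N m d1 d2 \<kappa>1 \<kappa>2 B U
               \<and> (\<forall>i<N. \<forall>p<m. \<forall>a<d1 p. \<forall>b<d2 p. U i p 0 a b = U0 i p a b)
               \<and> (\<forall>t>0. \<forall>i<N. \<forall>p<m. frob_norm (d1 p) (d2 p) (U i p t) = 1)
               \<and> (\<forall>t>0. \<forall>i<N. \<forall>a\<in>idxs (tdims m d1 d2). T i t a = mtensor m (\<lambda>p. U i p t) a)"
proof -
  define D where "D = tdims m d1 d2"
  define Tc where "Tc = (\<lambda>t a. (\<Sum>k<N. T k t a) / of_nat N)"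
  define Hf where "Hf j t r a c = Hg D (T j t) (Tc t) r a c" for j t r a c
  define I where "I p = {..<d1 p} \<times> {..<d2 p}" for p
  define M where "M j p t x y = (if x \<in> I p \<and> y \<in> I p then
       Kmat (B j p) (Hf j t (2*p)) (Hf j t (2*p+1)) \<kappa>1 \<kappa>2 x y else 0)" for j p t x y
  have lD: "length D = 2*m" by (simp add: D_def)
  have DE: "D ! (2*p) = d1 p" "D ! (2*p+1) = d2 p" if "p < m" for p
    using that by (simp_all add: D_def tdims_nth)
  have Tder: "((\<lambda>s. T j s a0) has_vector_derivative
      lohe_rhs D (kappa_coupling m \<kappa>1 \<kappa>2) (free_flow m B j) (T j t) (Tc t) a0) (at t within {0..})"
    if "t \<ge> 0" "j < N" "a0 \<in> idxs D" for t j a0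
    using sol that unfolding lohe_solution_def D_def Tc_def by blast
  have cT: "continuous_on {0..} (\<lambda>t. T k t a)" if "k < N" "a \<in> idxs D" for k a
    by (rule deriv_cont_on) (use Tder that in blast)
  have cH: "continuous_on {0..} (\<lambda>t. Hf j t r a c)" if "j < N" "a < D!r" for j r a c
    using Hg_cont[of N D "\<lambda>t k a. T k t a" j a r c] cT that unfolding Hf_def Tc_def by auto
  have cM: "continuous_on {0..} (\<lambda>t. M j p t x y)" if j: "j < N" and p: "p < m" for j p x y
  proof (cases "x \<in> I p \<and> y \<in> I p")
    case True
    then obtain a b c d where xy: "x = (a, b)" "y = (c, d)" and bd: "a < d1 p" "b < d2 p" "c < d1 p" "d < d2 p"
      unfolding I_def by auto
    have "continuous_on {0..} (\<lambda>t. B j p a b c d + of_real \<kappa>1 * (if d = b then Hf j t (2*p) a c else 0)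
         + of_real \<kappa>2 * (if c = a then Hf j t (2*p+1) b d else 0))"
    proof -
      have h1: "continuous_on {0..} (\<lambda>t. if d = b then Hf j t (2*p) a c else 0)"
        using cH[OF j, of a "2*p" c] bd DE[OF p] by (cases "d = b") auto
      have h2: "continuous_on {0..} (\<lambda>t. if c = a then Hf j t (2*p+1) b d else 0)"
        using cH[OF j, of b "2*p+1" d] bd DE[OF p] by (cases "c = a") auto
      show ?thesis by (intro continuous_intros h1 h2)
    qed
    then show ?thesis using True unfolding M_def xy Kmat_def by simp
  next
    case False
    then have "(\<lambda>t. M j p t x y) = (\<lambda>t. 0)" unfolding M_def by auto
    then show ?thesis by (metis continuous_on_const)
  qed
  have finI: "finite (I p)" for p by (simp add: I_def)
  let ?P = "\<lambda>j p X. j < N \<and> p < m \<longrightarrow> (\<forall>i. X 0 i = U0 j p (fst i) (snd i)) \<and>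
      (\<forall>t\<ge>0. \<forall>i\<in>I p. ((\<lambda>s. X s i) has_vector_derivative (\<Sum>k\<in>I p. M j p t i k * X t k)) (at t within {0..}))"
  have ex: "\<exists>X. ?P j p X" for j p
  proof (cases "j < N \<and> p < m")
    case True
    then show ?thesis using linear_ode_exists[OF finI, of "M j p" "\<lambda>i. U0 j p (fst i) (snd i)"] cM by auto
  qed auto
  define Xf where "Xf j p = (SOME X. ?P j p X)" for j p
  have Xf: "?P j p (Xf j p)" for j p unfolding Xf_def by (rule someI_ex[OF ex])
  define V where "V j p t a b = Xf j p t (a, b)" for j p t a b
  have V0: "V j p 0 a b = U0 j p a b" if "j < N" "p < m" for j p a b
    using Xf[of j p] that by (simp add: V_def)
  have Vder: "((\<lambda>s. V j p s a b) has_vector_derivative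
       apply4 (d1 p) (d2 p) (B j p) (V j p t) a b
        + of_real \<kappa>1 * (\<Sum>c<d1 p. Hf j t (2*p) a c * V j p t c b)
        + of_real \<kappa>2 * (\<Sum>c<d2 p. Hf j t (2*p+1) b c * V j p t a c)) (at t within {0..})"
    if j: "j < N" and p: "p < m" and t: "t \<ge> 0" and a: "a < d1 p" and b: "b < d2 p" for j p t a b
  proof -
    have ab: "(a, b) \<in> I p" using a b by (simp add: I_def)
    have "((\<lambda>s. V j p s a b) has_vector_derivative (\<Sum>k\<in>I p. M j p t (a, b) k * Xf j p t k)) (at t within {0..})"
      using Xf[of j p] j p t ab by (simp add: V_def)
    moreover have "(\<Sum>k\<in>I p. M j p t (a, b) k * Xf j p t k)
        = (\<Sum>k\<in>{..<d1 p} \<times> {..<d2 p}. Kmat (B j p) (Hf j t (2*p)) (Hf j t (2*p+1)) \<kappa>1 \<kappa>2 (a, b) k * V j p t (fst k) (snd k))"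
      unfolding I_def by (rule sum.cong) (use ab in \<open>auto simp: M_def V_def I_def\<close>)
    ultimately show ?thesis using a b by (simp add: Kmat_apply)
  qed
  define W where "W j t = mtensor m (\<lambda>p. V j p t)" for j t
  have WT: "W j t a0 = T j t a0" if j: "j < N" and t: "t \<ge> 0" and a0: "a0 \<in> idxs D" for j t a0
  proof -
    have Wder: "((\<lambda>s. W j s a0) has_vector_derivative Lin D \<kappa>1 \<kappa>2 (free_flow m B j) (Hf j t) (W j t) a0) (at t within {0..})"
      if t: "t \<ge> 0" and a0: "a0 \<in> idxs D" for t a0
      unfolding W_def D_def
      by (rule mtensor_Lin[where V="\<lambda>s p. V j p s"]) (use a0 Vder j t in \<open>auto simp: D_def\<close>)
    have Tder': "((\<lambda>s. T j s a0) has_vector_derivative Lin D \<kappa>1 \<kappa>2 (free_flow m B j) (Hf j t) (T j t) a0) (at t within {0..})"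
      if t: "t \<ge> 0" and a0: "a0 \<in> idxs D" for t a0
      using Tder[OF t j a0] lohe_rhs_Lin[of a0 m d1 d2] a0
      unfolding D_def Hf_def by (simp add: D_def)
    show ?thesis
    proof -
      have "W j t a0 - T j t a0 = 0"
      proof (rule linear_ode_unique[where I="idxs D" and D="\<lambda>s a. W j s a - T j s a"
             and L="\<lambda>t a0. Lin D \<kappa>1 \<kappa>2 (free_flow m B j) (Hf j t) (\<lambda>a. W j t a - T j t a) a0"])
        show "finite (idxs D)" by simp
      next
        fix t :: real and a assume "0 \<le> t" "a \<in> idxs D"
        then show "((\<lambda>s. W j s a - T j s a) has_vector_derivative
            Lin D \<kappa>1 \<kappa>2 (free_flow m B j) (Hf j t) (\<lambda>a. W j t a - T j t a) a) (at t within {0..})"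
          using has_vector_derivative_diff[OF Wder[of t a] Tder'[of t a]] Lin_diff[of D \<kappa>1 \<kappa>2 "free_flow m B j" "Hf j t" "W j t" a "T j t"]
          by simp
      next
        fix \<tau> :: real
        define Coef where "Coef t a0 = (\<Sum>a1\<in>idxs D. cmod (free_flow m B j a0 a1))
            + (\<Sum>r<length D. \<bar>kap \<kappa>1 \<kappa>2 r\<bar> * (\<Sum>c<D!r. cmod (Hf j t r (a0!r) c)))" for t a0
        have cC: "continuous_on {0..\<tau>} (\<lambda>t. \<Sum>a0\<in>idxs D. Coef t a0)"
        proof (rule continuous_on_sum)
          fix a0 assume a0: "a0 \<in> idxs D"
          have "continuous_on {0..\<tau>} (\<lambda>t. Hf j t r (a0!r) c)" if "r < length D" for r c
            by (rule continuous_on_subset[OF cH[OF j idxs_nth[OF a0 that]]]) auto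
          then show "continuous_on {0..\<tau>} (\<lambda>t. Coef t a0)"
            unfolding Coef_def by (intro continuous_intros) auto
        qed
        obtain K where K: "\<And>t. t \<in> {0..\<tau>} \<Longrightarrow> norm (\<Sum>a0\<in>idxs D. Coef t a0) \<le> K"
          by (rule continuous_on_compact_bound[OF _ cC]) auto
        have "cmod (Lin D \<kappa>1 \<kappa>2 (free_flow m B j) (Hf j t) (\<lambda>a. W j t a - T j t a) a0)
            \<le> K * (\<Sum>b\<in>idxs D. cmod (W j t b - T j t b))" if t: "t \<in> {0..\<tau>}" and a0: "a0 \<in> idxs D" for t a0
        proof -
          have C0: "Coef t a \<ge> 0" for a unfolding Coef_def by (auto intro!: add_nonneg_nonneg sum_nonneg mult_nonneg_nonneg)
          have "Coef t a0 \<le> (\<Sum>a0\<in>idxs D. Coef t a0)"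
            by (rule member_le_sum) (use a0 C0 in auto)
          also have "\<dots> \<le> K" using K[OF t] by simp
          finally have CK: "Coef t a0 \<le> K" .
          have "cmod (Lin D \<kappa>1 \<kappa>2 (free_flow m B j) (Hf j t) (\<lambda>a. W j t a - T j t a) a0)
              \<le> Coef t a0 * (\<Sum>b\<in>idxs D. cmod (W j t b - T j t b))"
            unfolding Coef_def by (rule Lin_bound[OF a0])
          also have "\<dots> \<le> K * (\<Sum>b\<in>idxs D. cmod (W j t b - T j t b))"
            by (rule mult_right_mono[OF CK]) (auto intro: sum_nonneg)
          finally show ?thesis .
        qed
        then show "\<exists>K. \<forall>t\<in>{0..\<tau>}. \<forall>a\<in>idxs D. cmod (Lin D \<kappa>1 \<kappa>2 (free_flow m B j) (Hf j t) (\<lambda>a. W j t a - T j t a) a)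
            \<le> K * (\<Sum>b\<in>idxs D. cmod (W j t b - T j t b))" by blast
      next
        fix a assume a: "a \<in> idxs D"
        have "W j 0 a = mtensor m (U0 j) a"
          unfolding W_def mtensor_def by (rule prod.cong) (auto simp: V0 j)
        then show "W j 0 a - T j 0 a = 0" using T0 j a by (simp add: D_def)
      qed (use t a0 in auto)
      then show ?thesis by simp
    qed
  qed
  have Vsol: "mm_solution N m d1 d2 \<kappa>1 \<kappa>2 B V"
    unfolding mm_solution_def
  proof (intro allI impI)
    fix t :: real and j p a b
    assume t: "0 \<le> t" and j: "j < N" and p: "p < m" and a: "a < d1 p" and b: "b < d2 p"
    let ?Vt = "\<lambda>j' p'. V j' p' t"
    have Tprod: "\<And>k a. k < N \<Longrightarrow> a \<in> idxs (tdims m d1 d2) \<Longrightarrow> T k t a = mtensor m (?Vt k) a"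
      using WT t unfolding W_def D_def by auto
    have H1: "Hf j t (2*p) a c = H1m N m d1 d2 ?Vt j p a c" if c: "c < d1 p" for c
    proof -
      have "Hf j t (2*p) a c = Hm N m d1 d2 ?Vt j (2*p) a c"
        unfolding Hf_def D_def Tc_def
        by (rule Hg_prod[OF Tprod]) (use p a c j in \<open>auto simp: tdims_nth\<close>)
      then show ?thesis by (simp add: Hm_def)
    qed
    have H2: "Hf j t (2*p+1) b c = H2m N m d1 d2 ?Vt j p b c" if c: "c < d2 p" for c
    proof -
      have "Hf j t (2*p+1) b c = Hm N m d1 d2 ?Vt j (2*p+1) b c"
        unfolding Hf_def D_def Tc_def
        by (rule Hg_prod[OF Tprod]) (use p b c j in \<open>auto simp: tdims_nth\<close>)
      then show ?thesis by (simp add: Hm_def)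
    qed
    have "((\<lambda>s. V j p s a b) has_vector_derivative
       apply4 (d1 p) (d2 p) (B j p) (V j p t) a b
        + of_real \<kappa>1 * (\<Sum>c<d1 p. Hf j t (2*p) a c * V j p t c b)
        + of_real \<kappa>2 * (\<Sum>c<d2 p. Hf j t (2*p+1) b c * V j p t a c)) (at t within {0..})"
      by (rule Vder[OF j p t a b])
    moreover have "(\<Sum>c<d1 p. Hf j t (2*p) a c * V j p t c b) = (\<Sum>c<d1 p. H1m N m d1 d2 ?Vt j p a c * V j p t c b)"
      by (rule sum.cong) (auto simp: H1)
    moreover have "(\<Sum>c<d2 p. Hf j t (2*p+1) b c * V j p t a c) = (\<Sum>c<d2 p. H2m N m d1 d2 ?Vt j p b c * V j p t a c)"
      by (rule sum.cong) (auto simp: H2[simplified])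
    ultimately show "((\<lambda>s. V j p s a b) has_vector_derivative mm_rhs N m d1 d2 \<kappa>1 \<kappa>2 B ?Vt j p a b) (at t within {0..})"
      by (simp add: mm_rhs_eq)
  qed
  have norms: "frob_norm (d1 p) (d2 p) (V i p t) = 1" if "t > 0" "i < N" "p < m" for t i p
  proof -
    have "frob_norm (d1 p) (d2 p) (V i p t) = frob_norm (d1 p) (d2 p) (V i p 0)"
      by (rule mm_norm[OF Vsol Bskew]) (use that in auto)
    also have "frob_norm (d1 p) (d2 p) (V i p 0) = frob_norm (d1 p) (d2 p) (U0 i p)"
      unfolding frob_norm_def using V0 that by simp
    finally show ?thesis using U0n that by simp
  qed
  show ?thesis
  proof (intro exI conjI allI impI ballI)
    show "mm_solution N m d1 d2 \<kappa>1 \<kappa>2 B V" by (rule Vsol)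
  next
    fix i p a b assume "i < N" "p < m" "a < d1 p" "b < d2 p"
    then show "V i p 0 a b = U0 i p a b" by (simp add: V0)
  next
    fix t :: real and i p assume "0 < t" "i < N" "p < m"
    then show "frob_norm (d1 p) (d2 p) (V i p t) = 1" by (rule norms)
  next
    fix t :: real and i a assume "0 < t" "i < N" "a \<in> idxs (tdims m d1 d2)"
    then show "T i t a = mtensor m (\<lambda>p. V i p t) a" using WT[of i t a] by (simp add: W_def D_def)
  qed
qed

theorem proposition5p1:
  fixes N m :: nat and d1 d2 :: "nat \<Rightarrow> nat" and \<kappa>1 \<kappa>2 :: real
    and B :: "nat \<Rightarrow> nat \<Rightarrow> nat \<Rightarrow> nat \<Rightarrow> nat \<Rightarrow> nat \<Rightarrow> complex"
  assumes "N \<ge> 1" and "m \<ge> 1"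
    and "\<forall>p<m. d1 p \<ge> 1 \<and> d2 p \<ge> 1"
    and "\<kappa>1 \<ge> 0" and "\<kappa>2 \<ge> 0"
    and "\<forall>j<N. \<forall>p<m. \<forall>a1<d1 p. \<forall>b1<d2 p. \<forall>a2<d1 p. \<forall>b2<d2 p.
           B j p a1 b1 a2 b2 = - cnj (B j p a2 b2 a1 b1)"
  shows
    "(\<forall>U. mm_solution N m d1 d2 \<kappa>1 \<kappa>2 B U \<longrightarrow>
          lohe_solution N (tdims m d1 d2) (kappa_coupling m \<kappa>1 \<kappa>2) (free_flow m B)
            (\<lambda>i t. mtensor m (\<lambda>p. U i p t)))
     \<and>
     (\<forall>T U0. lohe_solution N (tdims m d1 d2) (kappa_coupling m \<kappa>1 \<kappa>2) (free_flow m B) T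
          \<and> (\<forall>i<N. \<forall>p<m. frob_norm (d1 p) (d2 p) (U0 i p) = 1)
          \<and> (\<forall>i<N. \<forall>a\<in>idxs (tdims m d1 d2). T i 0 a = mtensor m (U0 i) a)
        \<longrightarrow> (\<exists>U. mm_solution N m d1 d2 \<kappa>1 \<kappa>2 B U
               \<and> (\<forall>i<N. \<forall>p<m. \<forall>a<d1 p. \<forall>b<d2 p. U i p 0 a b = U0 i p a b)
               \<and> (\<forall>t>0. \<forall>i<N. \<forall>p<m. frob_norm (d1 p) (d2 p) (U i p t) = 1)
               \<and> (\<forall>t>0. \<forall>i<N. \<forall>a\<in>idxs (tdims m d1 d2).
                     T i t a = mtensor m (\<lambda>p. U i p t) a)))"
  proof (intro conjI allI impI)
  fix U assume "mm_solution N m d1 d2 \<kappa>1 \<kappa>2 B U"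
  then show "lohe_solution N (tdims m d1 d2) (kappa_coupling m \<kappa>1 \<kappa>2) (free_flow m B)
            (\<lambda>i t. mtensor m (\<lambda>p. U i p t))" by (rule part1)
next
  fix T U0
  assume h: "lohe_solution N (tdims m d1 d2) (kappa_coupling m \<kappa>1 \<kappa>2) (free_flow m B) T
          \<and> (\<forall>i<N. \<forall>p<m. frob_norm (d1 p) (d2 p) (U0 i p) = 1)
          \<and> (\<forall>i<N. \<forall>a\<in>idxs (tdims m d1 d2). T i 0 a = mtensor m (U0 i) a)"
  show "\<exists>U. mm_solution N m d1 d2 \<kappa>1 \<kappa>2 B U
               \<and> (\<forall>i<N. \<forall>p<m. \<forall>a<d1 p. \<forall>b<d2 p. U i p 0 a b = U0 i p a b)
               \<and> (\<forall>t>0. \<forall>i<N. \<forall>p<m. frob_norm (d1 p) (d2 p) (U i p t) = 1)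
               \<and> (\<forall>t>0. \<forall>i<N. \<forall>a\<in>idxs (tdims m d1 d2).
                     T i t a = mtensor m (\<lambda>p. U i p t) a)"
    using part2[OF assms(6)] h by blast
qed

end
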